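(* Let $T$ be a complete discrete valuation ring with fraction field $K$ and uniformizer $t$. Let $\widehat R_0 \supset T$ be a complete discrete valuation ring with uniformizer $t$ and fraction field $F_0$, with absolute value $|t^n u| = \alpha^{-n}$ ($\alpha>1$ fixed, $u \in \widehat R_0^\times$). Let $F_1, F_2 \subset F_0$ be subfields containing $T$ and let $V \subset F_1 \cap \widehat R_0$, $W \subset F_2 \cap \widehat R_0$ be $t$-adically complete $T$-submodules with $V + W = \widehat R_0$, $V \cap t\widehat R_0 = tV$ and $W \cap t\widehat R_0 = tW$. Let $a,b,c$ be positive integers, let $\Omega \subset F_0^a \times F_0^b$ be an open neighborhood of $(0,0)$ and let $f : \Omega \to F_0^c$ be an analytic map. Let $f^a(x) = f(x,0)$ and $f^b(y) = f(0,y)$ (defined near $0$). Assume (i) $f(0,0)=0$ and (ii) the differentials $Df^a_0 : F_0^a \to F_0^c$ and $Df^b_0 : F_0^b \to F_0^c$ satisfy $$Df^a_0\big(V[1/t]^a\big) + Df^b_0\big(W[1/t]^b\big) = F_0^c.$$ Then there is a real number $\epsilon>0$ such that for every $y \in F_0^c$ with $|y| \le \epsilon$ there exist $v \in V^a$ and $w \in W^b$ with $(v,w) \in \Omega$ and $f(v,w) = y$.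
   Context: $t$-adically complete means $V \to \varprojlim_m V/t^{m+1}V$ is an isomorphism. On $F_0^c$ one uses the max norm $|y| = \max_i |y_i|$. *)

theory Defs
  imports Main Complex_Main
begin

text \<open>All fields live inside the ambient field F0, taken to be a type 'a :: field.
  Vectors in F0^n are functions nat => 'a vanishing outside {..<n}.\<close>

definition subring :: "'a::field set \<Rightarrow> bool" where
  "subring S \<longleftrightarrow> 0 \<in> S \<and> 1 \<in> S \<and> (\<forall>x\<in>S. \<forall>y\<in>S. x + y \<in> S \<and> x - y \<in> S \<and> x * y \<in> S)"

definition subfield :: "'a::field set \<Rightarrow> bool" where
  "subfield S \<longleftrightarrow> subring S \<and> (\<forall>x\<in>S. x \<noteq> 0 \<longrightarrow> inverse x \<in> S)"

definition is_unit_in :: "'a::field set \<Rightarrow> 'a \<Rightarrow> bool" where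
  "is_unit_in R u \<longleftrightarrow> u \<in> R \<and> u \<noteq> 0 \<and> inverse u \<in> R"

definition dvr_unif :: "'a::field set \<Rightarrow> 'a \<Rightarrow> bool" where
  "dvr_unif R t \<longleftrightarrow> subring R \<and> t \<in> R \<and> t \<noteq> 0 \<and> inverse t \<notin> R \<and>
     (\<forall>x\<in>R. x \<noteq> 0 \<longrightarrow> (\<exists>n::nat. \<exists>u. is_unit_in R u \<and> x = t ^ n * u))"

definition dvr_frac :: "'a::field set \<Rightarrow> 'a \<Rightarrow> bool" where
  "dvr_frac R t \<longleftrightarrow> dvr_unif R t \<and>
     (\<forall>x::'a. x \<noteq> 0 \<longrightarrow> (\<exists>n::int. \<exists>u. is_unit_in R u \<and> x = t powi n * u))"

definition tpow_mod :: "'a::field \<Rightarrow> nat \<Rightarrow> 'a set \<Rightarrow> 'a set" where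
  "tpow_mod t k M = {t ^ k * x | x. x \<in> M}"

definition submodule :: "'a::field set \<Rightarrow> 'a set \<Rightarrow> bool" where
  "submodule T M \<longleftrightarrow> 0 \<in> M \<and> (\<forall>x\<in>M. \<forall>y\<in>M. x + y \<in> M) \<and> (\<forall>r\<in>T. \<forall>x\<in>M. r * x \<in> M)"

text \<open>t-adic completeness: M \<rightarrow> lim M / t^(m+1) M is bijective.\<close>
definition t_complete :: "'a::field \<Rightarrow> 'a set \<Rightarrow> bool" where
  "t_complete t M \<longleftrightarrow>
     (\<forall>x\<in>M. (\<forall>m. x \<in> tpow_mod t (Suc m) M) \<longrightarrow> x = 0) \<and>
     (\<forall>s::nat \<Rightarrow> 'a. (\<forall>m. s m \<in> M \<and> s (Suc m) - s m \<in> tpow_mod t (Suc m) M) \<longrightarrow>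
        (\<exists>x\<in>M. \<forall>m. x - s m \<in> tpow_mod t (Suc m) M))"

definition dv_abs :: "'a::field set \<Rightarrow> 'a \<Rightarrow> real \<Rightarrow> 'a \<Rightarrow> real" where
  "dv_abs R t \<alpha> x = (if x = 0 then 0 else
     \<alpha> powr (- real_of_int (THE n::int. \<exists>u. is_unit_in R u \<and> x = t powi n * u)))"

definition vecs :: "nat \<Rightarrow> (nat \<Rightarrow> 'a::zero) set" where
  "vecs n = {x. \<forall>i\<ge>n. x i = 0}"

definition zvec :: "nat \<Rightarrow> 'a::zero" where
  "zvec = (\<lambda>_. 0)"

definition vnorm :: "('a \<Rightarrow> real) \<Rightarrow> nat \<Rightarrow> (nat \<Rightarrow> 'a) \<Rightarrow> real" where
  "vnorm av n x = Max (insert 0 ((\<lambda>i. av (x i)) ` {..<n}))"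

definition vdiff :: "(nat \<Rightarrow> 'a::ab_group_add) \<Rightarrow> (nat \<Rightarrow> 'a) \<Rightarrow> nat \<Rightarrow> 'a" where
  "vdiff x y = (\<lambda>i. x i - y i)"

definition pnorm :: "('a \<Rightarrow> real) \<Rightarrow> nat \<Rightarrow> nat \<Rightarrow> (nat \<Rightarrow> 'a) \<times> (nat \<Rightarrow> 'a) \<Rightarrow> real" where
  "pnorm av a b p = max (vnorm av a (fst p)) (vnorm av b (snd p))"

definition open_in_prod :: "('a::ab_group_add \<Rightarrow> real) \<Rightarrow> nat \<Rightarrow> nat \<Rightarrow> ((nat \<Rightarrow> 'a) \<times> (nat \<Rightarrow> 'a)) set \<Rightarrow> bool" where
  "open_in_prod av a b \<Omega> \<longleftrightarrow> \<Omega> \<subseteq> vecs a \<times> vecs b \<and>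
     (\<forall>p\<in>\<Omega>. \<exists>r>0. \<forall>q\<in>vecs a \<times> vecs b.
        pnorm av a b (vdiff (fst q) (fst p), vdiff (snd q) (snd p)) < r \<longrightarrow> q \<in> \<Omega>)"

definition has_usum :: "('a::ab_group_add \<Rightarrow> real) \<Rightarrow> ('i \<Rightarrow> 'a) \<Rightarrow> 'i set \<Rightarrow> 'a \<Rightarrow> bool"
  where "has_usum av g I s \<longleftrightarrow> (\<forall>\<epsilon>>0. \<exists>F. finite F \<and> F \<subseteq> I \<and>
     (\<forall>G. finite G \<and> F \<subseteq> G \<and> G \<subseteq> I \<longrightarrow> av (sum g G - s) < \<epsilon>))"

definition midx :: "nat \<Rightarrow> (nat \<Rightarrow> nat) set" where
  "midx n = {m. \<forall>i\<ge>n. m i = 0}"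

definition monom :: "nat \<Rightarrow> (nat \<Rightarrow> 'a::comm_ring_1) \<Rightarrow> (nat \<Rightarrow> nat) \<Rightarrow> 'a" where
  "monom n z m = (\<Prod>i<n. z i ^ m i)"

definition analytic_on_prod ::
  "('a::field \<Rightarrow> real) \<Rightarrow> nat \<Rightarrow> nat \<Rightarrow> nat \<Rightarrow> ((nat \<Rightarrow> 'a) \<times> (nat \<Rightarrow> 'a)) set \<Rightarrow>
   ((nat \<Rightarrow> 'a) \<Rightarrow> (nat \<Rightarrow> 'a) \<Rightarrow> (nat \<Rightarrow> 'a)) \<Rightarrow> bool" where
  "analytic_on_prod av a b c \<Omega> f \<longleftrightarrow>
     (\<forall>p\<in>\<Omega>. f (fst p) (snd p) \<in> vecs c) \<and>
     (\<forall>p\<in>\<Omega>. \<exists>r>0. \<exists>C :: nat \<Rightarrow> (nat \<Rightarrow> nat) \<Rightarrow> (nat \<Rightarrow> nat) \<Rightarrow> 'a.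
        \<forall>q\<in>\<Omega>. pnorm av a b (vdiff (fst q) (fst p), vdiff (snd q) (snd p)) < r \<longrightarrow>
          (\<forall>k<c. has_usum av
             (\<lambda>(m, m'). C k m m' * monom a (vdiff (fst q) (fst p)) m * monom b (vdiff (snd q) (snd p)) m')
             (midx a \<times> midx b) (f (fst q) (snd q) k)))"

definition lin_map :: "nat \<Rightarrow> nat \<Rightarrow> ((nat \<Rightarrow> 'a::field) \<Rightarrow> (nat \<Rightarrow> 'a)) \<Rightarrow> bool" where
  "lin_map n m L \<longleftrightarrow> (\<forall>x\<in>vecs n. L x \<in> vecs m) \<and>
     (\<forall>x\<in>vecs n. \<forall>y\<in>vecs n. L (\<lambda>i. x i + y i) = (\<lambda>k. L x k + L y k)) \<and>
     (\<forall>s. \<forall>x\<in>vecs n. L (\<lambda>i. s * x i) = (\<lambda>k. s * L x k))"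

definition has_diff0 :: "('a::field \<Rightarrow> real) \<Rightarrow> nat \<Rightarrow> nat \<Rightarrow> (nat \<Rightarrow> 'a) set \<Rightarrow>
   ((nat \<Rightarrow> 'a) \<Rightarrow> (nat \<Rightarrow> 'a)) \<Rightarrow> ((nat \<Rightarrow> 'a) \<Rightarrow> (nat \<Rightarrow> 'a)) \<Rightarrow> bool" where
  "has_diff0 av n m D g L \<longleftrightarrow> lin_map n m L \<and>
     (\<forall>\<epsilon>>0. \<exists>\<delta>>0. \<forall>x\<in>vecs n. x \<in> D \<and> vnorm av n x < \<delta> \<longrightarrow>
        vnorm av m (\<lambda>k. g x k - g zvec k - L x k) \<le> \<epsilon> * vnorm av n x)"

definition loc_vecs :: "'a::field \<Rightarrow> 'a set \<Rightarrow> nat \<Rightarrow> (nat \<Rightarrow> 'a) set" where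
  "loc_vecs t M n = {x \<in> vecs n. \<forall>i<n. \<exists>j::nat. \<exists>v\<in>M. x i = v / t ^ j}"

end

theory Submission
  imports Defs
begin

lemma subringD:
  assumes "subring S"
  shows "0 \<in> S" "1 \<in> S" "x \<in> S \<Longrightarrow> y \<in> S \<Longrightarrow> x + y \<in> S"
    "x \<in> S \<Longrightarrow> y \<in> S \<Longrightarrow> x - y \<in> S" "x \<in> S \<Longrightarrow> y \<in> S \<Longrightarrow> x * y \<in> S"
  using assms unfolding subring_def by auto

lemma subring_uminus: "subring S \<Longrightarrow> x \<in> S \<Longrightarrow> - x \<in> S"
  using subringD(4)[of S 0 x] subringD(1)[of S] by simp

lemma subring_power: "subring S \<Longrightarrow> x \<in> S \<Longrightarrow> x ^ n \<in> S"
  by (induction n) (auto intro: subringD)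

locale vsetup =
  fixes R0 :: "'a::field set" and t :: 'a and \<alpha> :: real
  assumes dvr: "dvr_frac R0 t" and R0compl: "t_complete t R0" and alpha: "\<alpha> > 1"
begin

abbreviation av where "av \<equiv> dv_abs R0 t \<alpha>"

lemma R0_subring: "subring R0" using dvr unfolding dvr_frac_def dvr_unif_def by auto
lemma t_R0: "t \<in> R0" and t_nz: "t \<noteq> 0" and invt: "inverse t \<notin> R0"
  using dvr unfolding dvr_frac_def dvr_unif_def by auto

lemmas R0 = subringD[OF R0_subring] subring_uminus[OF R0_subring] subring_power[OF R0_subring]

lemma tpow_R0: "t ^ n \<in> R0" using R0(7) t_R0 by blast

lemma unit_mult: "is_unit_in R0 u \<Longrightarrow> is_unit_in R0 v \<Longrightarrow> is_unit_in R0 (u * v)"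
  unfolding is_unit_in_def by (auto intro: R0 simp: inverse_mult_distrib)

lemma unit_inv: "is_unit_in R0 u \<Longrightarrow> is_unit_in R0 (inverse u)"
  unfolding is_unit_in_def by auto

lemma no_unit_tpow: assumes "is_unit_in R0 u" "t ^ Suc d = u" shows False
proof -
  have "inverse t = t ^ d * inverse u"
    using assms t_nz unfolding is_unit_in_def by (auto simp: field_simps)
  moreover have "t ^ d * inverse u \<in> R0" using assms(1) tpow_R0 R0(5) unfolding is_unit_in_def by auto
  ultimately show False using invt by simp
qed

lemma rep_unique_lt:
  assumes "is_unit_in R0 u" "is_unit_in R0 u'" "t powi n * u = t powi m * u'" "m < n"
  shows False
proof -
  define d where "d = nat (n - m - 1)"
  have d: "n - m = int (Suc d)" using assms(4) unfolding d_def by simp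
  have u0: "u \<noteq> 0" using assms(1) unfolding is_unit_in_def by auto
  have tm: "t powi m \<noteq> 0" using t_nz by simp
  have "t powi n = t powi (n - m) * t powi m" using t_nz by (simp add: power_int_add[symmetric])
  hence "t powi m * (t powi (n - m) * u) = t powi m * u'" using assms(3) by (simp only: mult_ac)
  hence "t powi (n - m) * u = u'" using tm t_nz by simp
  hence "t powi (n - m) = u' * inverse u" using u0 by (simp add: field_simps)
  hence "t ^ Suc d = u' * inverse u" using d by (metis power_int_of_nat)
  thus False using no_unit_tpow unit_mult[OF assms(2) unit_inv[OF assms(1)]] by blast
qed

lemma rep_unique:
  assumes "is_unit_in R0 u" "is_unit_in R0 u'" "t powi n * u = t powi m * u'"
  shows "n = m"
  using rep_unique_lt[OF assms] rep_unique_lt[OF assms(2,1) assms(3)[symmetric]] not_less_iff_gr_or_eq by blast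

definition val :: "'a \<Rightarrow> int" where
  "val x = (THE n::int. \<exists>u. is_unit_in R0 u \<and> x = t powi n * u)"

lemma val_rep: assumes "x \<noteq> 0" shows "\<exists>u. is_unit_in R0 u \<and> x = t powi (val x) * u"
proof -
  obtain n u where nu: "is_unit_in R0 u" "x = t powi n * u" using dvr assms unfolding dvr_frac_def by blast
  have "(THE n::int. \<exists>u. is_unit_in R0 u \<and> x = t powi n * u) = n"
    apply (rule the_equality) using nu rep_unique by blast+
  thus ?thesis using nu unfolding val_def by auto
qed

lemma val_eq: assumes "is_unit_in R0 u" "x = t powi n * u" shows "val x = n"
proof -
  have "x \<noteq> 0" using assms t_nz unfolding is_unit_in_def by auto
  then obtain u' where "is_unit_in R0 u'" "x = t powi (val x) * u'" using val_rep by blast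
  thus ?thesis using rep_unique assms by metis
qed

lemma av_val: "x \<noteq> 0 \<Longrightarrow> av x = \<alpha> powr (- of_int (val x))"
  unfolding dv_abs_def val_def by simp

lemma av_0[simp]: "av 0 = 0" unfolding dv_abs_def by simp

lemma av_pos: "x \<noteq> 0 \<Longrightarrow> av x > 0" using av_val alpha by simp
lemma av_nonneg[simp]: "av x \<ge> 0" using av_pos[of x] by (cases "x = 0") auto
lemma av_eq_0[simp]: "av x = 0 \<longleftrightarrow> x = 0" using av_pos[of x] by (cases "x = 0") auto

lemma unit_1: "is_unit_in R0 1" unfolding is_unit_in_def using R0 by auto

lemma val_mult: assumes "x \<noteq> 0" "y \<noteq> 0" shows "val (x * y) = val x + val y"
proof -
  obtain u where u: "is_unit_in R0 u" "x = t powi (val x) * u" using val_rep assms by blast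
  obtain v where v: "is_unit_in R0 v" "y = t powi (val y) * v" using val_rep assms by blast
  have "x * y = (t powi (val x) * u) * (t powi (val y) * v)" using u(2) v(2) by metis
  also have "\<dots> = t powi (val x + val y) * (u * v)" using t_nz by (simp add: power_int_add mult_ac)
  finally have "x * y = t powi (val x + val y) * (u * v)" .
  thus ?thesis using val_eq unit_mult[OF u(1) v(1)] by blast
qed

lemma val_tpowi: "val (t powi n) = n" using val_eq[OF unit_1] by simp

lemma val_R0: assumes "x \<noteq> 0" shows "x \<in> R0 \<longleftrightarrow> val x \<ge> 0"
proof
  assume "x \<in> R0"
  then obtain n :: nat and u where "is_unit_in R0 u" "x = t ^ n * u"
    using dvr assms unfolding dvr_frac_def dvr_unif_def by blast
  hence "val x = int n" using val_eq by (metis power_int_of_nat)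
  thus "val x \<ge> 0" by simp
next
  assume h: "val x \<ge> 0"
  obtain u where u: "is_unit_in R0 u" "x = t powi (val x) * u" using val_rep assms by blast
  have "t powi (val x) = t ^ nat (val x)" using h by (metis int_nat_eq power_int_of_nat)
  hence "x = t ^ nat (val x) * u" using u(2) by simp
  moreover have "u \<in> R0" using u(1) unfolding is_unit_in_def by simp
  ultimately show "x \<in> R0" using tpow_R0 R0(5) by metis
qed

lemma av_mult: "av (x * y) = av x * av y"
  by (cases "x = 0"; cases "y = 0") (auto simp: av_val val_mult powr_add[symmetric] algebra_simps)

lemma av_1[simp]: "av 1 = 1"
  using val_tpowi[of 0] av_val[of 1] alpha by simp

lemma av_uminus[simp]: "av (- x) = av x"
proof -
  have "av (-1) * av (-1) = 1" using av_mult[of "-1" "-1"] by simp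
  hence "av (-1) = 1" using av_nonneg[of "-1"]
    by (metis abs_of_nonneg abs_square_eq_1 mult.commute power2_eq_square)
  thus ?thesis using av_mult[of "-1" x] by simp
qed

lemma av_minus_commute: "av (x - y) = av (y - x)"
  using av_uminus[of "x - y"] by simp

lemma R0_av: "x \<in> R0 \<longleftrightarrow> av x \<le> 1"
proof (cases "x = 0")
  case True thus ?thesis using R0 by simp
next
  case False
  have "\<alpha> powr (- of_int (val x)) \<le> \<alpha> powr 0 \<longleftrightarrow> - of_int (val x) \<le> (0::real)"
    using powr_le_cancel_iff[OF alpha] by blast
  thus ?thesis using val_R0[OF False] av_val[OF False] alpha by simp
qed

lemma val_add: assumes "x \<noteq> 0" "y \<noteq> 0" "x + y \<noteq> 0"
  shows "val (x + y) \<ge> min (val x) (val y)"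
proof -
  define m where "m = min (val x) (val y)"
  have tm: "t powi (- m) \<noteq> 0" using t_nz by simp
  have "val (x * t powi (-m)) \<ge> 0" using val_mult[OF assms(1) tm] val_tpowi m_def by simp
  hence 1: "x * t powi (-m) \<in> R0" using val_R0 assms tm by simp
  have "val (y * t powi (-m)) \<ge> 0" using val_mult[OF assms(2) tm] val_tpowi m_def by simp
  hence 2: "y * t powi (-m) \<in> R0" using val_R0 assms tm by simp
  have "(x + y) * t powi (-m) \<in> R0" using R0(3)[OF 1 2] by (simp add: distrib_right)
  hence "val ((x + y) * t powi (-m)) \<ge> 0" using val_R0 assms(3) tm by simp
  thus ?thesis using val_mult[OF assms(3) tm] val_tpowi m_def by simp
qed

lemma av_add: "av (x + y) \<le> max (av x) (av y)"
proof (cases "x = 0 \<or> y = 0 \<or> x + y = 0")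
  case True
  have "0 \<le> max (av x) (av y)" using av_nonneg[of x] by (metis le_max_iff_disj)
  thus ?thesis using True by auto
next
  case False
  hence "val (x + y) \<ge> min (val x) (val y)" using val_add by auto
  thus ?thesis using False alpha av_val
    by (smt (verit, ccfv_SIG) of_int_le_iff powr_mono)
qed

lemma av_diff: "av (x - y) \<le> max (av x) (av y)"
  using av_add[of x "- y"] by simp

lemma av_t: "av t = inverse \<alpha>"
  using av_val[OF t_nz] val_tpowi[of 1] alpha by (simp add: powr_minus)

lemma av_tpow: "av (t ^ n) = inverse \<alpha> ^ n"
  by (induction n) (auto simp: av_mult av_t)

lemma inv_alpha: "inverse \<alpha> > 0" "inverse \<alpha> < 1" using alpha by (auto simp: field_simps)

lemma tpow_mod_iff: "x \<in> tpow_mod t n M \<longleftrightarrow> x / t ^ n \<in> M"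
proof
  assume "x \<in> tpow_mod t n M"
  then obtain y where "y \<in> M" "x = t ^ n * y" unfolding tpow_mod_def by blast
  thus "x / t ^ n \<in> M" using t_nz by simp
next
  assume "x / t ^ n \<in> M"
  moreover have "x = t ^ n * (x / t ^ n)" using t_nz by simp
  ultimately show "x \<in> tpow_mod t n M" unfolding tpow_mod_def by blast
qed

lemma av_inverse: "av (inverse x) = inverse (av x)"
proof (cases "x = 0")
  case False
  have "av x * av (inverse x) = 1" using av_mult[of x "inverse x"] False by simp
  thus ?thesis using inverse_unique by metis
qed simp

lemma av_divide: "av (x / y) = av x / av y"
  by (simp add: divide_inverse av_mult av_inverse)

lemma av_le_tpow: "av x \<le> inverse \<alpha> ^ n \<longleftrightarrow> x \<in> tpow_mod t n R0"
proof -
  have p: "inverse \<alpha> ^ n > 0" using inv_alpha by simp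
  have "av (x / t ^ n) = av x / inverse \<alpha> ^ n" by (simp add: av_divide av_tpow)
  hence "x / t ^ n \<in> R0 \<longleftrightarrow> av x / inverse \<alpha> ^ n \<le> 1" using R0_av by simp
  also have "\<dots> \<longleftrightarrow> av x \<le> inverse \<alpha> ^ n" using p alpha by (simp add: divide_le_eq_1)
  finally show ?thesis using tpow_mod_iff by simp
qed

lemma av_discrete: assumes "av x < inverse \<alpha> ^ n" shows "av x \<le> inverse \<alpha> ^ Suc n"
proof (cases "x = 0")
  case False
  have e: "inverse \<alpha> ^ k = \<alpha> powr (- real k)" for k using alpha
    by (simp add: powr_minus powr_realpow power_inverse)
  have "\<alpha> powr (- of_int (val x)) < \<alpha> powr (- real n)" using assms av_val[OF False] e by simp
  hence "val x > int n" using alpha by (simp add: powr_less_cancel_iff)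
  hence "val x \<ge> int (Suc n)" by simp
  hence "\<alpha> powr (- of_int (val x)) \<le> \<alpha> powr (- real (Suc n))" using alpha
    by (intro powr_mono) auto
  thus ?thesis using av_val[OF False] e[of "Suc n"] by (simp only:)
qed (use inv_alpha in auto)

lemma av_exact: assumes "x \<noteq> 0" "av x \<le> 1" shows "\<exists>n. av x = inverse \<alpha> ^ n"
proof -
  have "val x \<ge> 0" using val_R0 assms R0_av by auto
  then obtain n where n: "val x = int n" using nonneg_int_cases by blast
  have "inverse \<alpha> ^ n = \<alpha> powr (- real n)" using alpha
    by (simp add: powr_minus powr_realpow power_inverse)
  thus ?thesis using av_val[OF assms(1)] n by (metis of_int_of_nat_eq)
qed

end

lemma vnorm_nonneg: "vnorm av n x \<ge> 0"
  unfolding vnorm_def by (simp add: Max_ge_iff)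

lemma vnorm_ge: "i < n \<Longrightarrow> av (x i) \<le> vnorm av n x"
  unfolding vnorm_def by (rule Max_ge) auto

lemma vnorm_le_iff: "\<beta> \<ge> 0 \<Longrightarrow> vnorm av n x \<le> \<beta> \<longleftrightarrow> (\<forall>i<n. av (x i) \<le> \<beta>)"
  unfolding vnorm_def by (auto simp: Max_le_iff)

lemma vnorm_le: "\<beta> \<ge> 0 \<Longrightarrow> (\<And>i. i < n \<Longrightarrow> av (x i) \<le> \<beta>) \<Longrightarrow> vnorm av n x \<le> \<beta>"
  using vnorm_le_iff by blast

lemma vnorm_cases: "vnorm av n x = 0 \<or> (\<exists>i<n. vnorm av n x = av (x i))"
proof -
  have "vnorm av n x \<in> insert 0 ((\<lambda>i. av (x i)) ` {..<n})"
    unfolding vnorm_def by (rule Max_in) auto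
  thus ?thesis by auto
qed

lemma vnorm_lt_iff: "\<beta> > 0 \<Longrightarrow> vnorm av n x < \<beta> \<longleftrightarrow> (\<forall>i<n. av (x i) < \<beta>)"
  unfolding vnorm_def by (auto simp: Max_less_iff)

lemma pnorm_le_iff: "\<beta> \<ge> 0 \<Longrightarrow> pnorm av a b p \<le> \<beta> \<longleftrightarrow> (\<forall>i<a. av (fst p i) \<le> \<beta>) \<and> (\<forall>i<b. av (snd p i) \<le> \<beta>)"
  unfolding pnorm_def using vnorm_le_iff by (metis max.bounded_iff)

lemma pnorm_lt_iff: "\<beta> > 0 \<Longrightarrow> pnorm av a b p < \<beta> \<longleftrightarrow> (\<forall>i<a. av (fst p i) < \<beta>) \<and> (\<forall>i<b. av (snd p i) < \<beta>)"
  unfolding pnorm_def using vnorm_lt_iff by (metis max_less_iff_conj)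

lemma vdiff_zvec[simp]: "vdiff x zvec = x" unfolding vdiff_def zvec_def by simp

context vsetup
begin

lemma vnorm_eq_0: "vnorm av n x = 0 \<longleftrightarrow> (\<forall>i<n. x i = 0)"
proof -
  have "vnorm av n x \<le> 0 \<longleftrightarrow> (\<forall>i<n. av (x i) \<le> 0)" using vnorm_le_iff by blast
  moreover have "av (x i) \<le> 0 \<longleftrightarrow> x i = 0" for i using av_nonneg[of "x i"] av_eq_0[of "x i"] by linarith
  ultimately show ?thesis using vnorm_nonneg[of av n x] by auto
qed

lemma av_sum_le: "finite G \<Longrightarrow> \<beta> \<ge> 0 \<Longrightarrow> (\<And>i. i \<in> G \<Longrightarrow> av (g i) \<le> \<beta>) \<Longrightarrow> av (sum g G) \<le> \<beta>"
proof (induction G rule: finite_induct)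
  case (insert x F)
  have "av (sum g (insert x F)) = av (g x + sum g F)" using insert by simp
  also have "\<dots> \<le> max (av (g x)) (av (sum g F))" by (rule av_add)
  also have "\<dots> \<le> \<beta>" using insert by auto
  finally show ?case .
qed simp

lemma usumE:
  assumes "has_usum av g I s" "e > 0"
  obtains F where "finite F" "F \<subseteq> I" "\<And>G. finite G \<Longrightarrow> F \<subseteq> G \<Longrightarrow> G \<subseteq> I \<Longrightarrow> av (sum g G - s) < e"
proof -
  have "\<exists>F. finite F \<and> F \<subseteq> I \<and> (\<forall>G. finite G \<and> F \<subseteq> G \<and> G \<subseteq> I \<longrightarrow> av (sum g G - s) < e)"
    using assms unfolding has_usum_def by simp
  then obtain F where F: "finite F" "F \<subseteq> I" "\<forall>G. finite G \<and> F \<subseteq> G \<and> G \<subseteq> I \<longrightarrow> av (sum g G - s) < e"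
    by (elim exE conjE)
  show ?thesis by (rule that[OF F(1,2)]) (use F(3) in simp)
qed

lemma usum_add:
  assumes "has_usum av g I s" "has_usum av h I s'"
  shows "has_usum av (\<lambda>i. g i + h i) I (s + s')"
  unfolding has_usum_def
proof (intro allI impI)
  fix e :: real assume e: "e > 0"
  obtain F1 where F1: "finite F1" "F1 \<subseteq> I" "\<And>G. finite G \<Longrightarrow> F1 \<subseteq> G \<Longrightarrow> G \<subseteq> I \<Longrightarrow> av (sum g G - s) < e"
    using usumE[OF assms(1) e] by metis
  obtain F2 where F2: "finite F2" "F2 \<subseteq> I" "\<And>G. finite G \<Longrightarrow> F2 \<subseteq> G \<Longrightarrow> G \<subseteq> I \<Longrightarrow> av (sum h G - s') < e"
    using usumE[OF assms(2) e] by metis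
  have "av (sum (\<lambda>i. g i + h i) G - (s + s')) < e" if G: "finite G" "F1 \<union> F2 \<subseteq> G" "G \<subseteq> I" for G
  proof -
    have eq: "sum (\<lambda>i. g i + h i) G - (s + s') = (sum g G - s) + (sum h G - s')"
      by (simp add: sum.distrib)
    have 1: "av (sum g G - s) < e" using F1(3) G by simp
    have 2: "av (sum h G - s') < e" using F2(3) G by simp
    have "av (sum (\<lambda>i. g i + h i) G - (s + s')) \<le> max (av (sum g G - s)) (av (sum h G - s'))"
      unfolding eq by (rule av_add)
    thus ?thesis using 1 2 by linarith
  qed
  moreover have "finite (F1 \<union> F2)" "F1 \<union> F2 \<subseteq> I" using F1 F2 by auto
  ultimately show "\<exists>F. finite F \<and> F \<subseteq> I \<and> (\<forall>G. finite G \<and> F \<subseteq> G \<and> G \<subseteq> I \<longrightarrow> av (sum (\<lambda>i. g i + h i) G - (s + s')) < e)"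
    by blast
qed

lemma usum_uminus:
  assumes "has_usum av g I s"
  shows "has_usum av (\<lambda>i. - g i) I (- s)"
proof -
  have "sum (\<lambda>i. - g i) G - (- s) = - (sum g G - s)" for G by (simp add: sum_negf)
  hence "av (sum (\<lambda>i. - g i) G - (- s)) = av (sum g G - s)" for G using av_uminus[of "sum g G - s"] by simp
  thus ?thesis using assms unfolding has_usum_def by presburger
qed

lemma usum_diff:
  assumes "has_usum av g I s" "has_usum av h I s'"
  shows "has_usum av (\<lambda>i. g i - h i) I (s - s')"
  using usum_add[OF assms(1) usum_uminus[OF assms(2)]] by simp

lemma usum_finite:
  assumes "finite S" "S \<subseteq> I" "\<And>i. i \<in> I \<Longrightarrow> i \<notin> S \<Longrightarrow> g i = 0"
  shows "has_usum av g I (sum g S)"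
  unfolding has_usum_def
proof (intro allI impI exI[of _ S] conjI allI impI)
  fix e :: real and G assume e: "e > 0" and G: "finite G \<and> S \<subseteq> G \<and> G \<subseteq> I"
  have "sum g G = sum g S" using G assms(3) by (intro sum.mono_neutral_right) auto
  thus "av (sum g G - sum g S) < e" using e by simp
qed (use assms in auto)

lemma usum_bound:
  assumes "has_usum av g I s" "\<beta> \<ge> 0" "\<And>i. i \<in> I \<Longrightarrow> av (g i) \<le> \<beta>"
  shows "av s \<le> \<beta>"
proof (rule ccontr)
  assume nle: "\<not> av s \<le> \<beta>"
  hence e: "av s - \<beta> > 0" by simp
  then obtain F where F: "finite F" "F \<subseteq> I" "\<And>G. finite G \<Longrightarrow> F \<subseteq> G \<Longrightarrow> G \<subseteq> I \<Longrightarrow> av (sum g G - s) < av s - \<beta>"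
    using usumE[OF assms(1)] by metis
  have 1: "av (sum g F - s) < av s - \<beta>" using F by simp
  have 2: "av (sum g F) \<le> \<beta>" using F assms by (intro av_sum_le) auto
  have "av s \<le> max (av (sum g F)) (av (sum g F - s))" using av_diff[of "sum g F" "sum g F - s"] by simp
  thus False using 1 2 assms(2) nle by (simp add: max_def split: if_splits)
qed

lemma usum_term_bound:
  assumes "has_usum av g I s"
  shows "\<exists>B\<ge>0. \<forall>i\<in>I. av (g i) \<le> B"
proof -
  obtain F where F: "finite F" "F \<subseteq> I" "\<And>G. finite G \<Longrightarrow> F \<subseteq> G \<Longrightarrow> G \<subseteq> I \<Longrightarrow> av (sum g G - s) < 1"
    using usumE[OF assms zero_less_one] by metis
  define B where "B = max 1 (Max (insert 0 ((\<lambda>i. av (g i)) ` F)))"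
  have B1: "1 \<le> B" unfolding B_def by simp
  have "av (g i) \<le> B" if i: "i \<in> I" for i
  proof (cases "i \<in> F")
    case True
    have "av (g i) \<le> Max (insert 0 ((\<lambda>i. av (g i)) ` F))"
      by (rule Max_ge) (use F(1) True in auto)
    thus ?thesis unfolding B_def by simp
  next
    case False
    have a: "av (sum g F - s) < 1" using F by simp
    have b: "av (sum g (insert i F) - s) < 1" using F(3)[of "insert i F"] F(1,2) i by blast
    have "g i = (sum g (insert i F) - s) - (sum g F - s)" using False F(1) by simp
    hence "av (g i) \<le> max (av (sum g (insert i F) - s)) (av (sum g F - s))" using av_diff by metis
    hence "av (g i) < 1" using a b by (simp add: max_def split: if_splits)
    thus ?thesis using B1 by simp
  qed
  thus ?thesis using B1 by (intro exI[of _ B]) auto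
qed

definition good :: "'a set \<Rightarrow> bool" where
  "good M \<longleftrightarrow> M \<subseteq> R0 \<and> (\<forall>x\<in>M. \<forall>y\<in>M. x - y \<in> M) \<and>
     (\<forall>v\<in>M. \<forall>n. av v \<le> inverse \<alpha> ^ n \<longrightarrow> v \<in> tpow_mod t n M) \<and> t_complete t M"

lemma tpow_mod_mono: "M \<subseteq> N \<Longrightarrow> tpow_mod t n M \<subseteq> tpow_mod t n N"
  unfolding tpow_mod_def by auto

lemma goodD:
  assumes "good M"
  shows "M \<subseteq> R0" "x \<in> M \<Longrightarrow> y \<in> M \<Longrightarrow> x - y \<in> M"
    "v \<in> M \<Longrightarrow> av v \<le> inverse \<alpha> ^ n \<Longrightarrow> v \<in> tpow_mod t n M" "t_complete t M"
  using assms unfolding good_def by auto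

lemma good_limit:
  assumes "good M" "\<And>m. s m \<in> M" "\<And>m. av (s (Suc m) - s m) \<le> inverse \<alpha> ^ Suc m"
  shows "\<exists>x\<in>M. \<forall>m. av (x - s m) \<le> inverse \<alpha> ^ Suc m"
proof -
  have 1: "\<forall>m. s m \<in> M \<and> s (Suc m) - s m \<in> tpow_mod t (Suc m) M"
    using goodD(2,3)[OF assms(1)] assms(2,3) by simp
  have "\<forall>s::nat \<Rightarrow> 'a. (\<forall>m. s m \<in> M \<and> s (Suc m) - s m \<in> tpow_mod t (Suc m) M) \<longrightarrow>
        (\<exists>x\<in>M. \<forall>m. x - s m \<in> tpow_mod t (Suc m) M)"
    using goodD(4)[OF assms(1)] unfolding t_complete_def by (rule conjunct2)
  then obtain x where x: "x \<in> M" "\<forall>m. x - s m \<in> tpow_mod t (Suc m) M"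
    using 1 by meson
  have "x - s m \<in> tpow_mod t (Suc m) R0" for m
    using x(2) tpow_mod_mono[OF goodD(1)[OF assms(1)]] by blast
  thus ?thesis using x(1) av_le_tpow by blast
qed

lemma good_R0: "good R0"
  unfolding good_def
proof (intro conjI)
  show "\<forall>x\<in>R0. \<forall>y\<in>R0. x - y \<in> R0" using R0(4) by simp
  show "\<forall>v\<in>R0. \<forall>n. av v \<le> inverse \<alpha> ^ n \<longrightarrow> v \<in> tpow_mod t n R0" using av_le_tpow by simp
qed (use R0compl in simp_all)

lemma good_sub:
  assumes "submodule T M" "subring T" "t \<in> T" "M \<subseteq> R0" "t_complete t M"
    and sat: "M \<inter> tpow_mod t 1 R0 = tpow_mod t 1 M"
  shows "good M"
proof -
  have m1: "- 1 \<in> T" using subring_uminus[OF assms(2) subringD(2)[OF assms(2)]] .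
  have diff: "x - y \<in> M" if "x \<in> M" "y \<in> M" for x y
  proof -
    have "\<forall>r\<in>T. \<forall>x\<in>M. r * x \<in> M" using assms(1) unfolding submodule_def by blast
    hence "(-1) * y \<in> M" using m1 that(2) by blast
    moreover have "\<forall>x\<in>M. \<forall>y\<in>M. x + y \<in> M" using assms(1) unfolding submodule_def by blast
    ultimately have "x + (-1) * y \<in> M" using that(1) by blast
    thus ?thesis by simp
  qed
  have sat_n: "v \<in> M \<Longrightarrow> av v \<le> inverse \<alpha> ^ n \<Longrightarrow> v \<in> tpow_mod t n M" for n v
  proof (induction n arbitrary: v)
    case 0 
    have "v = t ^ 0 * v" by simp
    thus ?case using 0 unfolding tpow_mod_def by blast
  next
    case (Suc n)
    have "inverse \<alpha> ^ Suc n \<le> inverse \<alpha> ^ 1"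
      using power_decreasing[of 1 "Suc n" "inverse \<alpha>"] inv_alpha by simp
    hence "av v \<le> inverse \<alpha> ^ 1" using Suc.prems(2) by linarith
    hence "v \<in> tpow_mod t 1 R0" using av_le_tpow by blast
    hence "v \<in> tpow_mod t 1 M" using sat Suc.prems(1) by blast
    then obtain v' where v': "v' \<in> M" "v = t ^ 1 * v'" unfolding tpow_mod_def by auto
    have "av v = inverse \<alpha> * av v'" using v'(2) av_mult av_t by simp
    hence "av v' \<le> inverse \<alpha> ^ n" using Suc.prems(2) inv_alpha by simp
    hence "v' \<in> tpow_mod t n M" using Suc.IH v'(1) by blast
    then obtain w where w: "w \<in> M" "v' = t ^ n * w" unfolding tpow_mod_def by auto
    hence "v = t ^ Suc n * w" using v'(2) by simp
    thus "v \<in> tpow_mod t (Suc n) M" using w(1) unfolding tpow_mod_def by blast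
  qed
  show ?thesis unfolding good_def using assms(4,5) diff sat_n by blast
qed

end

definition ev :: "nat \<Rightarrow> nat \<Rightarrow> nat" where "ev i = (\<lambda>j. if j = i then 1 else 0)"
definition z0 :: "nat \<Rightarrow> nat" where "z0 = (\<lambda>_. 0)"

lemma monom_z0[simp]: "monom n x z0 = 1"
  unfolding monom_def z0_def by simp

lemma monom_ev: assumes "i < n" shows "monom n x (ev i) = x i"
proof -
  have "monom n x (ev i) = (\<Prod>j<n. if j = i then x j else 1)"
    unfolding monom_def ev_def by (intro prod.cong) auto
  also have "\<dots> = x i" using assms by (simp add: prod.delta)
  finally show ?thesis .
qed

lemma ev_midx: "i < n \<Longrightarrow> ev i \<in> midx n" unfolding ev_def midx_def by auto
lemma z0_midx: "z0 \<in> midx n" unfolding z0_def midx_def by auto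

lemma sum_ev: "i < n \<Longrightarrow> (\<Sum>j<n. ev i j) = 1"
  unfolding ev_def by (simp add: sum.delta)
lemma sum_z0[simp]: "(\<Sum>j<n. z0 j) = 0" unfolding z0_def by simp

lemma ev_neq_z0: "ev i \<noteq> z0"
  unfolding ev_def z0_def by (metis zero_neq_one)

lemma ev_inj: "ev i = ev j \<Longrightarrow> i = j"
  unfolding ev_def by (metis zero_neq_one)

lemma deg0: assumes "m \<in> midx n" "(\<Sum>j<n. m j) = 0" shows "m = z0"
proof
  fix j show "m j = z0 j"
  proof (cases "j < n")
    case True thus ?thesis using assms(2) unfolding z0_def by simp
  next
    case False thus ?thesis using assms(1) unfolding midx_def z0_def by simp
  qed
qed

lemma deg1: assumes "m \<in> midx n" "(\<Sum>j<n. m j) = 1" shows "\<exists>i<n. m = ev i"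
proof -
  obtain i where i: "i < n" "m i \<noteq> 0"
    using assms(2) by (metis lessThan_iff one_neq_zero sum.neutral)
  have "m i + (\<Sum>j\<in>{..<n} - {i}. m j) = 1"
    using assms(2) i(1) by (metis finite_lessThan lessThan_iff sum.remove)
  hence mi: "m i = 1" and rest: "(\<Sum>j\<in>{..<n} - {i}. m j) = 0" using i(2) by linarith+
  have "m = ev i"
  proof
    fix j show "m j = ev i j"
    proof (cases "j = i")
      case True thus ?thesis using mi unfolding ev_def by simp
    next
      case False
      show ?thesis
      proof (cases "j < n")
        case True thus ?thesis using rest False unfolding ev_def by simp
      next
        case False' : False
        thus ?thesis using assms(1) False unfolding midx_def ev_def by simp
      qed
    qed
  qed
  thus ?thesis using i(1) by blast
qed

context vsetup
begin

lemma av_power: "av (x ^ k) = av x ^ k"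
  by (induction k) (auto simp: av_mult)

lemma av_prod: "av (prod g S) = prod (\<lambda>i. av (g i)) S"
  by (induction S rule: infinite_finite_induct) (auto simp: av_mult)

lemma monom_bound:
  assumes "\<rho> \<ge> 0" "\<And>i. i < n \<Longrightarrow> av (x i) \<le> \<rho>"
  shows "av (monom n x m) \<le> \<rho> ^ (\<Sum>i<n. m i)"
proof -
  have "av (monom n x m) = (\<Prod>i<n. av (x i) ^ m i)"
    unfolding monom_def by (simp add: av_prod av_power)
  also have "\<dots> \<le> (\<Prod>i<n. \<rho> ^ m i)"
    by (intro prod_mono) (auto intro: power_mono assms)
  also have "\<dots> = \<rho> ^ (\<Sum>i<n. m i)" by (simp add: power_sum)
  finally show ?thesis .
qed

lemma prod2_diff:
  assumes "\<rho> \<ge> 0" "\<delta> \<ge> 0"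
    and "av P \<le> \<rho> ^ d1" "av Q \<le> \<rho> ^ d1" "\<rho> * av (P - Q) \<le> \<rho> ^ d1 * \<delta>"
    and "av p \<le> \<rho> ^ d2" "av q \<le> \<rho> ^ d2" "\<rho> * av (p - q) \<le> \<rho> ^ d2 * \<delta>"
  shows "\<rho> * av (P * p - Q * q) \<le> \<rho> ^ (d1 + d2) * \<delta>"
proof -
  have eq: "P * p - Q * q = P * (p - q) + (P - Q) * q" by (simp add: algebra_simps)
  have "av (P * p - Q * q) \<le> max (av P * av (p - q)) (av (P - Q) * av q)"
    unfolding eq using av_add[of "P * (p - q)" "(P - Q) * q"] by (simp add: av_mult)
  hence "\<rho> * av (P * p - Q * q) \<le> \<rho> * max (av P * av (p - q)) (av (P - Q) * av q)"
    using assms(1) by (rule mult_left_mono)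
  also have "\<dots> = max (av P * (\<rho> * av (p - q))) ((\<rho> * av (P - Q)) * av q)"
    using assms(1) by (simp add: max_mult_distrib_left mult_ac)
  also have "\<dots> \<le> \<rho> ^ (d1 + d2) * \<delta>"
  proof (rule max.boundedI)
    have "av P * (\<rho> * av (p - q)) \<le> \<rho> ^ d1 * (\<rho> ^ d2 * \<delta>)"
      by (rule mult_mono) (use assms in auto)
    thus "av P * (\<rho> * av (p - q)) \<le> \<rho> ^ (d1 + d2) * \<delta>" by (simp add: power_add mult_ac)
    have "(\<rho> * av (P - Q)) * av q \<le> (\<rho> ^ d1 * \<delta>) * \<rho> ^ d2"
      by (rule mult_mono) (use assms in auto)
    thus "(\<rho> * av (P - Q)) * av q \<le> \<rho> ^ (d1 + d2) * \<delta>" by (simp add: power_add mult_ac)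
  qed
  finally show ?thesis .
qed

lemma power_diff_bound:
  assumes "\<rho> \<ge> 0" "\<delta> \<ge> 0" "av x \<le> \<rho>" "av y \<le> \<rho>" "av (x - y) \<le> \<delta>"
  shows "\<rho> * av (x ^ k - y ^ k) \<le> \<rho> ^ k * \<delta>"
proof (induction k)
  case 0 thus ?case using assms by simp
next
  case (Suc k)
  have 1: "\<rho> * av (x - y) \<le> \<rho> ^ 1 * \<delta>" using assms by (simp add: mult_left_mono)
  have "\<rho> * av (x ^ k * x - y ^ k * y) \<le> \<rho> ^ (k + 1) * \<delta>"
    by (rule prod2_diff[OF assms(1,2) _ _ Suc]) (use assms 1 in \<open>auto simp: av_power intro: power_mono\<close>)
  thus ?case by (simp add: mult_ac)
qed

lemma monom_diff:
  assumes "\<rho> \<ge> 0" "\<delta> \<ge> 0" "\<And>i. i < n \<Longrightarrow> av (x i) \<le> \<rho>" "\<And>i. i < n \<Longrightarrow> av (y i) \<le> \<rho>"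
    "\<And>i. i < n \<Longrightarrow> av (x i - y i) \<le> \<delta>"
  shows "\<rho> * av (monom n x m - monom n y m) \<le> \<rho> ^ (\<Sum>i<n. m i) * \<delta>"
  using assms(3-)
proof (induction n)
  case 0 thus ?case using assms unfolding monom_def by simp
next
  case (Suc n)
  have eqx: "monom (Suc n) x m = monom n x m * x n ^ m n" unfolding monom_def by simp
  have eqy: "monom (Suc n) y m = monom n y m * y n ^ m n" unfolding monom_def by simp
  have "\<rho> * av (monom n x m * x n ^ m n - monom n y m * y n ^ m n) \<le> \<rho> ^ ((\<Sum>i<n. m i) + m n) * \<delta>"
  proof (rule prod2_diff[OF assms(1,2)])
    show "av (monom n x m) \<le> \<rho> ^ (\<Sum>i<n. m i)" using Suc.prems assms(1) by (intro monom_bound) auto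
    show "av (monom n y m) \<le> \<rho> ^ (\<Sum>i<n. m i)" using Suc.prems assms(1) by (intro monom_bound) auto
    show "\<rho> * av (monom n x m - monom n y m) \<le> \<rho> ^ (\<Sum>i<n. m i) * \<delta>" using Suc by auto
    show "av (x n ^ m n) \<le> \<rho> ^ m n" using Suc.prems assms(1) by (auto simp: av_power intro: power_mono)
    show "av (y n ^ m n) \<le> \<rho> ^ m n" using Suc.prems assms(1) by (auto simp: av_power intro: power_mono)
    show "\<rho> * av (x n ^ m n - y n ^ m n) \<le> \<rho> ^ m n * \<delta>" using Suc.prems assms(1,2) by (intro power_diff_bound) auto
  qed
  thus ?case using eqx eqy by (simp add: add.commute)
qed

lemma monom_tpow: "monom n (\<lambda>i. if i < n then t ^ s else 0) m = t ^ (s * (\<Sum>i<n. m i))"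
proof -
  have "monom n (\<lambda>i. if i < n then t ^ s else 0) m = (\<Prod>i<n. t ^ (s * m i))"
    unfolding monom_def by (intro prod.cong) (auto simp: power_mult)
  also have "\<dots> = t ^ (s * (\<Sum>i<n. m i))" by (simp add: power_sum sum_distrib_left)
  finally show ?thesis .
qed

end

context vsetup
begin

lemma small_pow: "e > 0 \<Longrightarrow> \<exists>n. inverse \<alpha> ^ n < e"
  using real_arch_pow_inv inv_alpha by blast

lemma finite_bound:
  fixes c :: nat
  assumes "\<And>k. k < c \<Longrightarrow> \<exists>B\<ge>0. \<forall>x\<in>S. P k x \<le> (B::real)"
  shows "\<exists>B\<ge>0. \<forall>k<c. \<forall>x\<in>S. P k x \<le> B"
proof -
  obtain Bf where Bf: "\<forall>k\<in>{..<c}. Bf k \<ge> 0 \<and> (\<forall>x\<in>S. P k x \<le> Bf k)"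
    using assms bchoice[of "{..<c}" "\<lambda>k B. B \<ge> 0 \<and> (\<forall>x\<in>S. P k x \<le> B)"] by auto
  have "Bf k \<le> (\<Sum>j<c. Bf j)" if "k < c" for k
    using that Bf by (intro member_le_sum) auto
  hence "\<forall>k<c. \<forall>x\<in>S. P k x \<le> (\<Sum>j<c. Bf j)" using Bf by (meson lessThan_iff order_trans)
  moreover have "(\<Sum>j<c. Bf j) \<ge> 0" using Bf by (intro sum_nonneg) auto
  ultimately show ?thesis by blast
qed

end

definition E1 :: "nat \<Rightarrow> nat \<Rightarrow> ((nat \<Rightarrow> nat) \<times> (nat \<Rightarrow> nat)) set" where
  "E1 a b = (\<lambda>i. (ev i, z0)) ` {..<a} \<union> (\<lambda>i. (z0, ev i)) ` {..<b}"

lemma E1_finite: "finite (E1 a b)" unfolding E1_def by simp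
lemma E1_sub: "E1 a b \<subseteq> midx a \<times> midx b" unfolding E1_def using ev_midx z0_midx by auto

lemma E1_lin:
  assumes "\<mu> \<in> E1 a b"
  shows "\<exists>i. (i < a \<and> (\<forall>h. monom a (fst h) (fst \<mu>) * monom b (snd h) (snd \<mu>) = fst h i)) \<or>
             (i < b \<and> (\<forall>h. monom a (fst h) (fst \<mu>) * monom b (snd h) (snd \<mu>) = snd h i))"
  using assms unfolding E1_def by (auto simp: monom_ev)

lemma E1_deg:
  assumes "\<mu> \<in> E1 a b" shows "(\<Sum>i<a. fst \<mu> i) + (\<Sum>i<b. snd \<mu> i) = 1"
  using assms unfolding E1_def by (auto simp: sum_ev)

lemma not_E1_deg:
  assumes "\<mu> \<in> midx a \<times> midx b" "\<mu> \<notin> E1 a b"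
  shows "(\<Sum>i<a. fst \<mu> i) + (\<Sum>i<b. snd \<mu> i) \<noteq> 1"
proof
  assume h: "(\<Sum>i<a. fst \<mu> i) + (\<Sum>i<b. snd \<mu> i) = 1"
  show False
  proof (cases "(\<Sum>i<a. fst \<mu> i) = 1")
    case True
    then obtain i where i: "i < a" "fst \<mu> = ev i" using deg1 assms(1) by (metis mem_Times_iff)
    have "snd \<mu> = z0" using deg0 assms(1) h True by (metis add_left_cancel add.right_neutral mem_Times_iff)
    hence "\<mu> = (ev i, z0)" using i by (metis prod.collapse)
    thus False using assms(2) i unfolding E1_def by auto
  next
    case False
    hence a0: "(\<Sum>i<a. fst \<mu> i) = 0" and b1: "(\<Sum>i<b. snd \<mu> i) = 1" using h by linarith+
    obtain i where i: "i < b" "snd \<mu> = ev i" using deg1 assms(1) b1 by (metis mem_Times_iff)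
    have "fst \<mu> = z0" using deg0 assms(1) a0 by (metis mem_Times_iff)
    hence "\<mu> = (z0, ev i)" using i by (metis prod.collapse)
    thus False using assms(2) i unfolding E1_def by auto
  qed
qed


lemma pnorm_nonneg: "pnorm av a b p \<ge> 0"
  unfolding pnorm_def using vnorm_nonneg by (metis le_max_iff_disj)

context vsetup
begin

lemma term_bound_deg2:
  fixes C \<Delta> :: 'a and B \<rho> \<delta> :: real and s e :: nat
  assumes "\<rho> > 0" "\<delta> \<ge> 0" "\<rho> \<le> inverse \<alpha> ^ s"
    and "\<rho> * av \<Delta> \<le> \<rho> ^ (e + 2) * \<delta>"
    and "av C * inverse \<alpha> ^ (s * (e + 2)) \<le> B"
  shows "av (C * \<Delta>) \<le> B / inverse \<alpha> ^ (2 * s) * \<rho> * \<delta>"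
proof -
  define \<beta> where "\<beta> = inverse \<alpha>"
  have b0: "\<beta> > 0" using inv_alpha unfolding \<beta>_def by simp
  have "\<rho> * av \<Delta> \<le> \<rho> * (\<rho> ^ (e + 1) * \<delta>)" using assms(4) by (simp add: mult_ac)
  hence 1: "av \<Delta> \<le> \<rho> ^ (e + 1) * \<delta>" using assms(1) by simp
  have "\<rho> ^ e \<le> (\<beta> ^ s) ^ e" using assms(1,3) unfolding \<beta>_def by (intro power_mono) auto
  hence 2: "\<rho> ^ (e + 1) * \<delta> \<le> \<rho> * \<beta> ^ (s * e) * \<delta>"
    using assms(1,2) by (simp add: power_mult[symmetric] mult_ac mult_left_mono mult_right_mono)
  have "av (C * \<Delta>) = av C * av \<Delta>" by (rule av_mult)
  also have "\<dots> \<le> av C * (\<rho> * \<beta> ^ (s * e) * \<delta>)"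
    using 1 2 by (intro mult_left_mono) auto
  also have "\<dots> = (av C * \<beta> ^ (s * (e + 2))) * \<rho> * \<delta> / \<beta> ^ (2 * s)"
  proof -
    have "s * (e + 2) = s * e + 2 * s" by simp
    hence "\<beta> ^ (s * (e + 2)) = \<beta> ^ (s * e) * \<beta> ^ (2 * s)"
      by (metis power_add)
    thus ?thesis using b0 by (simp add: field_simps)
  qed
  also have "\<dots> \<le> B * \<rho> * \<delta> / \<beta> ^ (2 * s)"
    using assms(1,2,5) b0 unfolding \<beta>_def by (intro divide_right_mono mult_right_mono) auto
  finally show ?thesis unfolding \<beta>_def by simp
qed

lemma pnorm_coord:
  assumes "i < a" shows "av (fst h i) \<le> pnorm av a b h"
  unfolding pnorm_def using vnorm_ge[OF assms, of av "fst h"] by (metis le_max_iff_disj)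

lemma pnorm_coord2:
  assumes "i < b" shows "av (snd h i) \<le> pnorm av a b h"
  unfolding pnorm_def using vnorm_ge[OF assms, of av "snd h"] by (metis le_max_iff_disj)

lemma E1_add:
  assumes "\<mu> \<in> E1 a b"
  shows "monom a (\<lambda>i. x i + y i) (fst \<mu>) * monom b (\<lambda>i. x' i + y' i) (snd \<mu>) =
         monom a x (fst \<mu>) * monom b x' (snd \<mu>) + monom a y (fst \<mu>) * monom b y' (snd \<mu>)"
  using assms unfolding E1_def by (auto simp: monom_ev)

lemma E1_scale:
  assumes "\<mu> \<in> E1 a b"
  shows "monom a (\<lambda>i. z * x i) (fst \<mu>) * monom b (\<lambda>i. z * x' i) (snd \<mu>) =
         z * (monom a x (fst \<mu>) * monom b x' (snd \<mu>))"
  using assms unfolding E1_def by (auto simp: monom_ev)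

lemma E1_bound:
  assumes "\<mu> \<in> E1 a b"
  shows "av (monom a (fst h) (fst \<mu>) * monom b (snd h) (snd \<mu>)) \<le> pnorm av a b h"
  using assms unfolding E1_def by (auto simp: monom_ev intro: pnorm_coord pnorm_coord2)

lemma analytic_estimate:
  fixes a b c :: nat and \<Omega> and f :: "(nat \<Rightarrow> 'a) \<Rightarrow> (nat \<Rightarrow> 'a) \<Rightarrow> (nat \<Rightarrow> 'a)"
  assumes \<Omega>open: "open_in_prod av a b \<Omega>" and \<Omega>0: "(zvec, zvec) \<in> \<Omega>"
    and fan: "analytic_on_prod av a b c \<Omega> f"
  shows "\<exists>\<rho>0 \<kappa> \<Lambda> Lp. \<rho>0 > 0 \<and> \<kappa> \<ge> 0 \<and> \<Lambda> \<ge> 0 \<and>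
     (\<forall>h. Lp h \<in> vecs c) \<and>
     (\<forall>h h'. Lp (\<lambda>i. fst h i + fst h' i, \<lambda>i. snd h i + snd h' i) = (\<lambda>k. Lp h k + Lp h' k)) \<and>
     (\<forall>x h. Lp (\<lambda>i. x * fst h i, \<lambda>i. x * snd h i) = (\<lambda>k. x * Lp h k)) \<and>
     (\<forall>h. vnorm av c (Lp h) \<le> \<Lambda> * pnorm av a b h) \<and>
     (\<forall>q\<in>vecs a \<times> vecs b. pnorm av a b q \<le> \<rho>0 \<longrightarrow> q \<in> \<Omega>) \<and>
     (\<forall>\<rho> q q'. 0 < \<rho> \<and> \<rho> \<le> \<rho>0 \<and> q \<in> vecs a \<times> vecs b \<and> q' \<in> vecs a \<times> vecs b \<and>
        pnorm av a b q \<le> \<rho> \<and> pnorm av a b q' \<le> \<rho> \<longrightarrow>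
        vnorm av c (\<lambda>k. f (fst q') (snd q') k - f (fst q) (snd q) k - (Lp q' k - Lp q k))
          \<le> \<kappa> * \<rho> * pnorm av a b (vdiff (fst q') (fst q), vdiff (snd q') (snd q)))"
proof -
  define I where "I = midx a \<times> midx b"
  define \<beta> where "\<beta> = inverse \<alpha>"
  have b0: "\<beta> > 0" "\<beta> < 1" using inv_alpha unfolding \<beta>_def by auto
  define deg where "deg \<mu> = (\<Sum>i<a. fst \<mu> i) + (\<Sum>i<b. snd \<mu> i)" for \<mu> :: "(nat \<Rightarrow> nat) \<times> (nat \<Rightarrow> nat)"
  have "\<forall>p\<in>\<Omega>. \<exists>r>0. \<exists>C :: nat \<Rightarrow> (nat \<Rightarrow> nat) \<Rightarrow> (nat \<Rightarrow> nat) \<Rightarrow> 'a. \<forall>q\<in>\<Omega>. pnorm av a b (vdiff (fst q) (fst p), vdiff (snd q) (snd p)) < r \<longrightarrow>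
      (\<forall>k<c. has_usum av (\<lambda>(m, m'). C k m m' * monom a (vdiff (fst q) (fst p)) m * monom b (vdiff (snd q) (snd p)) m')
             (midx a \<times> midx b) (f (fst q) (snd q) k))"
    using fan unfolding analytic_on_prod_def by (rule conjunct2)
  from bspec[OF this \<Omega>0] obtain r and C :: "nat \<Rightarrow> (nat \<Rightarrow> nat) \<Rightarrow> (nat \<Rightarrow> nat) \<Rightarrow> 'a" where r: "r > 0"
    and rC: "\<forall>q\<in>\<Omega>. pnorm av a b q < r \<longrightarrow> (\<forall>k<c. has_usum av (\<lambda>(m, m'). C k m m' * monom a (fst q) m * monom b (snd q) m') I (f (fst q) (snd q) k))"
    unfolding I_def by auto
  have "\<forall>p\<in>\<Omega>. \<exists>r>0. \<forall>q\<in>vecs a \<times> vecs b. pnorm av a b (vdiff (fst q) (fst p), vdiff (snd q) (snd p)) < r \<longrightarrow> q \<in> \<Omega>"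
    using \<Omega>open unfolding open_in_prod_def by (rule conjunct2)
  from bspec[OF this \<Omega>0] obtain r' where r': "r' > 0" "\<forall>q\<in>vecs a \<times> vecs b. pnorm av a b q < r' \<longrightarrow> q \<in> \<Omega>"
    by auto
  obtain s where s: "\<beta> ^ s < min r r'" using small_pow[of "min r r'"] r r'(1) unfolding \<beta>_def by auto
  define \<rho>0 where "\<rho>0 = \<beta> ^ s"
  have \<rho>0: "\<rho>0 > 0" unfolding \<rho>0_def using b0 by simp
  define \<phi> where "\<phi> k q = (\<lambda>(m, m'). C k m m' * monom a (fst q) m * monom b (snd q) m')" for k and q :: "(nat \<Rightarrow> 'a) \<times> (nat \<Rightarrow> 'a)"
  have phi_eq: "\<phi> k h \<mu> = C k (fst \<mu>) (snd \<mu>) * (monom a (fst h) (fst \<mu>) * monom b (snd h) (snd \<mu>))" for k h \<mu>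
    unfolding \<phi>_def by (simp add: split_beta mult.assoc)
  have dom: "q \<in> \<Omega> \<and> (\<forall>k<c. has_usum av (\<phi> k q) I (f (fst q) (snd q) k))"
    if "q \<in> vecs a \<times> vecs b" "pnorm av a b q \<le> \<rho>0" for q
  proof -
    have "pnorm av a b q < r'" "pnorm av a b q < r" using that(2) s unfolding \<rho>0_def by auto
    thus ?thesis using r'(2) rC that(1) unfolding \<phi>_def by blast
  qed
  define qs where "qs = ((\<lambda>i. if i < a then t ^ s else 0) :: nat \<Rightarrow> 'a, (\<lambda>i. if i < b then t ^ s else 0) :: nat \<Rightarrow> 'a)"
  have qs_vecs: "qs \<in> vecs a \<times> vecs b" unfolding qs_def vecs_def by auto
  have qs_norm: "pnorm av a b qs \<le> \<rho>0"
    using \<rho>0 unfolding qs_def \<rho>0_def \<beta>_def by (subst pnorm_le_iff) (auto simp: av_tpow)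
  have "\<exists>B\<ge>0. \<forall>\<mu>\<in>I. av (\<phi> k qs \<mu>) \<le> B" if "k < c" for k
    using usum_term_bound dom[OF qs_vecs qs_norm] that by blast
  then obtain B where B: "B \<ge> 0" "\<forall>k<c. \<forall>\<mu>\<in>I. av (\<phi> k qs \<mu>) \<le> B"
    using finite_bound[of c I "\<lambda>k \<mu>. av (\<phi> k qs \<mu>)"] by blast
  have Cb: "av (C k (fst \<mu>) (snd \<mu>)) * \<beta> ^ (s * deg \<mu>) \<le> B" if "k < c" "\<mu> \<in> I" for k \<mu>
  proof -
    have "\<phi> k qs \<mu> = C k (fst \<mu>) (snd \<mu>) * (t ^ (s * (\<Sum>i<a. fst \<mu> i)) * t ^ (s * (\<Sum>i<b. snd \<mu> i)))"
      unfolding phi_eq qs_def by (simp add: monom_tpow)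
    hence eq: "av (\<phi> k qs \<mu>) = av (C k (fst \<mu>) (snd \<mu>)) * \<beta> ^ (s * deg \<mu>)"
      unfolding deg_def \<beta>_def by (simp add: av_mult av_tpow power_add[symmetric] distrib_left)
    have "av (\<phi> k qs \<mu>) \<le> B" using B(2) that by blast
    thus ?thesis using eq by simp
  qed
  define Lp where "Lp h = (\<lambda>k. if k < c then (\<Sum>\<mu>\<in>E1 a b. \<phi> k h \<mu>) else 0)" for h
  define \<Lambda> where "\<Lambda> = B / \<beta> ^ s"
  define \<kappa> where "\<kappa> = B / \<beta> ^ (2 * s)"
  have P1: "\<forall>h. Lp h \<in> vecs c" unfolding Lp_def vecs_def by auto
  have P2: "\<forall>h h'. Lp (\<lambda>i. fst h i + fst h' i, \<lambda>i. snd h i + snd h' i) = (\<lambda>k. Lp h k + Lp h' k)"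
  proof (intro allI)
    fix h h' :: "(nat \<Rightarrow> 'a) \<times> (nat \<Rightarrow> 'a)"
    have A: "\<phi> k (\<lambda>i. fst h i + fst h' i, \<lambda>i. snd h i + snd h' i) \<mu> = \<phi> k h \<mu> + \<phi> k h' \<mu>" if "\<mu> \<in> E1 a b" for k \<mu>
      by (simp add: phi_eq E1_add[OF that] distrib_left)
    show "Lp (\<lambda>i. fst h i + fst h' i, \<lambda>i. snd h i + snd h' i) = (\<lambda>k. Lp h k + Lp h' k)"
    proof (rule ext)
      fix k show "Lp (\<lambda>i. fst h i + fst h' i, \<lambda>i. snd h i + snd h' i) k = Lp h k + Lp h' k"
      proof (cases "k < c")
        case True
        have "(\<Sum>\<mu>\<in>E1 a b. \<phi> k (\<lambda>i. fst h i + fst h' i, \<lambda>i. snd h i + snd h' i) \<mu>) = (\<Sum>\<mu>\<in>E1 a b. \<phi> k h \<mu> + \<phi> k h' \<mu>)"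
          by (rule sum.cong[OF refl]) (rule A)
        thus ?thesis using True unfolding Lp_def by (simp add: sum.distrib)
      qed (simp add: Lp_def)
    qed
  qed
  have P3: "\<forall>x h. Lp (\<lambda>i. x * fst h i, \<lambda>i. x * snd h i) = (\<lambda>k. x * Lp h k)"
  proof (intro allI)
    fix x and h :: "(nat \<Rightarrow> 'a) \<times> (nat \<Rightarrow> 'a)"
    have A: "\<phi> k (\<lambda>i. x * fst h i, \<lambda>i. x * snd h i) \<mu> = x * \<phi> k h \<mu>" if "\<mu> \<in> E1 a b" for k \<mu>
      by (simp add: phi_eq E1_scale[OF that] mult_ac)
    show "Lp (\<lambda>i. x * fst h i, \<lambda>i. x * snd h i) = (\<lambda>k. x * Lp h k)"
    proof (rule ext)
      fix k show "Lp (\<lambda>i. x * fst h i, \<lambda>i. x * snd h i) k = x * Lp h k"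
      proof (cases "k < c")
        case True
        have "(\<Sum>\<mu>\<in>E1 a b. \<phi> k (\<lambda>i. x * fst h i, \<lambda>i. x * snd h i) \<mu>) = (\<Sum>\<mu>\<in>E1 a b. x * \<phi> k h \<mu>)"
          by (rule sum.cong[OF refl]) (rule A)
        thus ?thesis using True unfolding Lp_def by (simp add: sum_distrib_left)
      qed (simp add: Lp_def)
    qed
  qed
  have P4: "\<forall>h. vnorm av c (Lp h) \<le> \<Lambda> * pnorm av a b h"
  proof
    fix h :: "(nat \<Rightarrow> 'a) \<times> (nat \<Rightarrow> 'a)"
    have L0: "\<Lambda> \<ge> 0" unfolding \<Lambda>_def using B(1) b0 by simp
    have "av (\<phi> k h \<mu>) \<le> \<Lambda> * pnorm av a b h" if "k < c" "\<mu> \<in> E1 a b" for k \<mu>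
    proof -
      have d1: "deg \<mu> = 1" using E1_deg[OF that(2)] unfolding deg_def .
      have mI: "\<mu> \<in> I" using E1_sub that(2) unfolding I_def by blast
      have "av (C k (fst \<mu>) (snd \<mu>)) * \<beta> ^ s \<le> B" using Cb[OF that(1) mI] d1 by simp
      hence c1: "av (C k (fst \<mu>) (snd \<mu>)) \<le> \<Lambda>" unfolding \<Lambda>_def using b0 by (simp add: field_simps)
      have c2: "av (monom a (fst h) (fst \<mu>) * monom b (snd h) (snd \<mu>)) \<le> pnorm av a b h"
        using E1_bound[OF that(2)] .
      show ?thesis unfolding phi_eq av_mult[of "C k (fst \<mu>) (snd \<mu>)"] using c1 c2 L0 by (intro mult_mono) auto
    qed
    hence "av (Lp h k) \<le> \<Lambda> * pnorm av a b h" if "k < c" for k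
      unfolding Lp_def using that L0 pnorm_nonneg[of av a b h] by (auto intro!: av_sum_le E1_finite)
    thus "vnorm av c (Lp h) \<le> \<Lambda> * pnorm av a b h"
      using L0 pnorm_nonneg[of av a b h] by (intro vnorm_le) auto
  qed
  have P5: "\<forall>q\<in>vecs a \<times> vecs b. pnorm av a b q \<le> \<rho>0 \<longrightarrow> q \<in> \<Omega>" using dom by blast
  have P6: "vnorm av c (\<lambda>k. f (fst q') (snd q') k - f (fst q) (snd q) k - (Lp q' k - Lp q k))
          \<le> \<kappa> * \<rho> * pnorm av a b (vdiff (fst q') (fst q), vdiff (snd q') (snd q))"
    if hyp: "0 < \<rho>" "\<rho> \<le> \<rho>0" "q \<in> vecs a \<times> vecs b" "q' \<in> vecs a \<times> vecs b"
        "pnorm av a b q \<le> \<rho>" "pnorm av a b q' \<le> \<rho>" for \<rho> q q'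
  proof -
    define \<delta> where "\<delta> = pnorm av a b (vdiff (fst q') (fst q), vdiff (snd q') (snd q))"
    have \<delta>0: "\<delta> \<ge> 0" unfolding \<delta>_def by (rule pnorm_nonneg)
    have r0: "\<rho> \<ge> 0" using hyp(1) by simp
    have \<rho>s: "\<rho> \<le> inverse \<alpha> ^ s" using hyp(2) unfolding \<rho>0_def \<beta>_def .
    have qc: "\<forall>i<a. av (fst q i) \<le> \<rho>" "\<forall>i<b. av (snd q i) \<le> \<rho>"
      using hyp(5) pnorm_le_iff[OF r0] by blast+
    have qc': "\<forall>i<a. av (fst q' i) \<le> \<rho>" "\<forall>i<b. av (snd q' i) \<le> \<rho>"
      using hyp(6) pnorm_le_iff[OF r0] by blast+
    have dc: "\<forall>i<a. av (fst q' i - fst q i) \<le> \<delta>" "\<forall>i<b. av (snd q' i - snd q i) \<le> \<delta>"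
      using pnorm_le_iff[OF \<delta>0, of av a b "(vdiff (fst q') (fst q), vdiff (snd q') (snd q))"]
      unfolding \<delta>_def vdiff_def by auto
    have kn: "\<kappa> * \<rho> * \<delta> \<ge> 0" unfolding \<kappa>_def using B(1) b0 r0 \<delta>0 by simp
    have qdom: "pnorm av a b q \<le> \<rho>0" "pnorm av a b q' \<le> \<rho>0" using hyp by auto
    have kest: "av (f (fst q') (snd q') k - f (fst q) (snd q) k - (Lp q' k - Lp q k)) \<le> \<kappa> * \<rho> * \<delta>"
      if kc: "k < c" for k
    proof -
      have S1: "has_usum av (\<phi> k q') I (f (fst q') (snd q') k)" using dom[OF hyp(4) qdom(2)] kc by blast
      have S2: "has_usum av (\<phi> k q) I (f (fst q) (snd q) k)" using dom[OF hyp(3) qdom(1)] kc by blast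
      define Lin where "Lin \<mu> = (if \<mu> \<in> E1 a b then \<phi> k q' \<mu> - \<phi> k q \<mu> else 0)" for \<mu>
      have S3: "has_usum av Lin I (sum Lin (E1 a b))"
        by (rule usum_finite) (use E1_finite E1_sub in \<open>auto simp: Lin_def I_def\<close>)
      have "sum Lin (E1 a b) = (\<Sum>\<mu>\<in>E1 a b. \<phi> k q' \<mu> - \<phi> k q \<mu>)"
        by (rule sum.cong) (auto simp: Lin_def)
      hence sumLin: "sum Lin (E1 a b) = Lp q' k - Lp q k"
        unfolding Lp_def using kc by (simp add: sum_subtractf)
      have S: "has_usum av (\<lambda>\<mu>. (\<phi> k q' \<mu> - \<phi> k q \<mu>) - Lin \<mu>) I
           ((f (fst q') (snd q') k - f (fst q) (snd q) k) - (Lp q' k - Lp q k))"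
        using usum_diff[OF usum_diff[OF S1 S2] S3] unfolding sumLin .
      have T: "av ((\<phi> k q' \<mu> - \<phi> k q \<mu>) - Lin \<mu>) \<le> \<kappa> * \<rho> * \<delta>" if mI: "\<mu> \<in> I" for \<mu>
      proof (cases "\<mu> \<in> E1 a b")
        case True thus ?thesis unfolding Lin_def using kn by simp
      next
        case False
        hence LinE: "Lin \<mu> = 0" unfolding Lin_def by simp
        have m1: "fst \<mu> \<in> midx a" "snd \<mu> \<in> midx b" using mI unfolding I_def by auto
        have dne1: "deg \<mu> \<noteq> 1" using not_E1_deg[of \<mu> a b] mI False unfolding I_def deg_def by auto
        show ?thesis
        proof (cases "deg \<mu> = 0")
          case True
          hence "(\<Sum>i<a. fst \<mu> i) = 0" "(\<Sum>i<b. snd \<mu> i) = 0" unfolding deg_def by auto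
          hence "fst \<mu> = z0" "snd \<mu> = z0" using deg0 m1 by blast+
          hence "\<phi> k q' \<mu> - \<phi> k q \<mu> = 0" unfolding phi_eq by simp
          thus ?thesis using LinE kn by simp
        next
          case False
          then obtain e where e: "deg \<mu> = e + 2" using dne1
            by (metis add_2_eq_Suc' less_2_cases_iff linorder_not_less nat_le_iff_add add.commute One_nat_def)
          have \<Delta>: "\<rho> * av (monom a (fst q') (fst \<mu>) * monom b (snd q') (snd \<mu>) - monom a (fst q) (fst \<mu>) * monom b (snd q) (snd \<mu>))
                 \<le> \<rho> ^ ((\<Sum>i<a. fst \<mu> i) + (\<Sum>i<b. snd \<mu> i)) * \<delta>"
          proof (rule prod2_diff[OF r0 \<delta>0])
            show "av (monom a (fst q') (fst \<mu>)) \<le> \<rho> ^ (\<Sum>i<a. fst \<mu> i)" using qc' r0 by (intro monom_bound) auto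
            show "av (monom a (fst q) (fst \<mu>)) \<le> \<rho> ^ (\<Sum>i<a. fst \<mu> i)" using qc r0 by (intro monom_bound) auto
            show "\<rho> * av (monom a (fst q') (fst \<mu>) - monom a (fst q) (fst \<mu>)) \<le> \<rho> ^ (\<Sum>i<a. fst \<mu> i) * \<delta>"
              using qc qc' dc r0 \<delta>0 by (intro monom_diff) auto
            show "av (monom b (snd q') (snd \<mu>)) \<le> \<rho> ^ (\<Sum>i<b. snd \<mu> i)" using qc' r0 by (intro monom_bound) auto
            show "av (monom b (snd q) (snd \<mu>)) \<le> \<rho> ^ (\<Sum>i<b. snd \<mu> i)" using qc r0 by (intro monom_bound) auto
            show "\<rho> * av (monom b (snd q') (snd \<mu>) - monom b (snd q) (snd \<mu>)) \<le> \<rho> ^ (\<Sum>i<b. snd \<mu> i) * \<delta>"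
              using qc qc' dc r0 \<delta>0 by (intro monom_diff) auto
          qed
          hence \<Delta>': "\<rho> * av (monom a (fst q') (fst \<mu>) * monom b (snd q') (snd \<mu>) - monom a (fst q) (fst \<mu>) * monom b (snd q) (snd \<mu>))
                 \<le> \<rho> ^ (e + 2) * \<delta>" using e unfolding deg_def by simp
          have CB: "av (C k (fst \<mu>) (snd \<mu>)) * inverse \<alpha> ^ (s * (e + 2)) \<le> B"
            using Cb[OF kc mI] e unfolding \<beta>_def by simp
          have eq: "\<phi> k q' \<mu> - \<phi> k q \<mu> = C k (fst \<mu>) (snd \<mu>) *
              (monom a (fst q') (fst \<mu>) * monom b (snd q') (snd \<mu>) - monom a (fst q) (fst \<mu>) * monom b (snd q) (snd \<mu>))"
            unfolding phi_eq by (simp add: right_diff_distrib)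
          have "av (\<phi> k q' \<mu> - \<phi> k q \<mu>) \<le> B / inverse \<alpha> ^ (2 * s) * \<rho> * \<delta>"
            unfolding eq by (rule term_bound_deg2[OF hyp(1) \<delta>0 \<rho>s \<Delta>' CB])
          thus ?thesis using LinE unfolding \<kappa>_def \<beta>_def by simp
        qed
      qed
      show ?thesis using usum_bound[OF S kn T] .
    qed
    show ?thesis unfolding \<delta>_def[symmetric] using kn kest by (intro vnorm_le) auto
  qed
  show ?thesis
    apply (rule exI[of _ \<rho>0], rule exI[of _ \<kappa>], rule exI[of _ \<Lambda>], rule exI[of _ Lp])
    using \<rho>0 P1 P2 P3 P4 P5 P6 B(1) b0 unfolding \<kappa>_def \<Lambda>_def by auto
qed

end

context vsetup
begin

lemma vnorm_scale_le: "vnorm av n (\<lambda>i. z * x i) \<le> av z * vnorm av n x"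
proof (rule vnorm_le)
  show "0 \<le> av z * vnorm av n x" using vnorm_nonneg[of av n x] by simp
  fix i assume "i < n"
  hence "av (x i) \<le> vnorm av n x" by (rule vnorm_ge)
  thus "av (z * x i) \<le> av z * vnorm av n x" unfolding av_mult by (rule mult_left_mono) simp
qed

lemma vnorm_diff_le: "av (x k - y k) \<le> max (vnorm av n x) (vnorm av n y)" if "k < n"
proof -
  have "av (x k - y k) \<le> max (av (x k)) (av (y k))" by (rule av_diff)
  also have "\<dots> \<le> max (vnorm av n x) (vnorm av n y)"
    using vnorm_ge[OF that, of av x] vnorm_ge[OF that, of av y] by (rule max.mono)
  finally show ?thesis .
qed

lemma zvec_eq: assumes "x \<in> vecs n" "vnorm av n x = 0" shows "x = zvec"
proof
  fix i show "x i = zvec i"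
  proof (cases "i < n")
    case True thus ?thesis using assms(2) vnorm_eq_0[of n x] unfolding zvec_def by simp
  next
    case False thus ?thesis using assms(1) unfolding vecs_def zvec_def by simp
  qed
qed

lemma diff_unique:
  fixes L G :: "(nat \<Rightarrow> 'a) \<Rightarrow> (nat \<Rightarrow> 'a)"
  assumes hd: "has_diff0 av n c D g L"
    and Gv: "\<forall>x. G x \<in> vecs c"
    and Gs: "\<forall>z x. G (\<lambda>i. z * x i) = (\<lambda>k. z * G x k)"
    and est: "\<rho>0 > 0" "\<kappa> \<ge> 0" "\<forall>x\<in>vecs n. 0 < vnorm av n x \<and> vnorm av n x \<le> \<rho>0 \<longrightarrow>
       x \<in> D \<and> vnorm av c (\<lambda>k. g x k - g zvec k - G x k) \<le> \<kappa> * vnorm av n x ^ 2"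
    and x: "x \<in> vecs n"
  shows "L x = G x"
proof -
  have lin: "lin_map n c L" using hd unfolding has_diff0_def by blast
  have Ls: "\<forall>z. L (\<lambda>i. z * x i) = (\<lambda>k. z * L x k)" using lin x unfolding lin_map_def by blast
  have Lv: "L x \<in> vecs c" using lin x unfolding lin_map_def by blast
  have "av (L x k - G x k) = 0" if kc: "k < c" for k
  proof (cases "vnorm av n x = 0")
    case True
    have "x = (\<lambda>i. 0 * x i)" using zvec_eq[OF x True] unfolding zvec_def by simp
    hence "L x = (\<lambda>k. 0 * L x k)" "G x = (\<lambda>k. 0 * G x k)" using Ls Gs by metis+
    hence "L x k = 0" "G x k = 0" by (metis mult_zero_left)+
    thus ?thesis by simp
  next
    case False
    define N where "N = vnorm av n x"
    have N0: "N > 0" using False vnorm_nonneg[of av n x] unfolding N_def by simp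
    have "av (L x k - G x k) \<le> \<epsilon>" if e: "\<epsilon> > 0" for \<epsilon>
    proof -
      define \<epsilon>' where "\<epsilon>' = \<epsilon> / (2 * N)"
      have e': "\<epsilon>' > 0" unfolding \<epsilon>'_def using e N0 by simp
      obtain \<delta> where \<delta>: "\<delta> > 0" "\<forall>y\<in>vecs n. y \<in> D \<and> vnorm av n y < \<delta> \<longrightarrow>
          vnorm av c (\<lambda>k. g y k - g zvec k - L y k) \<le> \<epsilon>' * vnorm av n y"
        using hd e' unfolding has_diff0_def by blast
      define M where "M = min (min \<delta> \<rho>0) (\<epsilon> / ((\<kappa> + 1) * N))"
      have M0: "M > 0" unfolding M_def using \<delta>(1) est(1,2) e N0 by simp
      obtain m where m: "inverse \<alpha> ^ m < M / N" using small_pow[of "M / N"] M0 N0 by auto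
      define \<beta> where "\<beta> = inverse \<alpha>"
      have b0: "\<beta> ^ m > 0" unfolding \<beta>_def using inv_alpha by simp
      define y where "y = (\<lambda>i. t ^ m * x i)"
      have yv: "y \<in> vecs n" using x unfolding y_def vecs_def by auto
      have ny: "vnorm av n y \<le> \<beta> ^ m * N"
        using vnorm_scale_le[where z="t ^ m" and x=x and n=n] unfolding y_def N_def \<beta>_def by (simp add: av_tpow)
      have ny2: "\<beta> ^ m * N \<le> vnorm av n y"
      proof -
        obtain i where i: "i < n" "N = av (x i)" using vnorm_cases[of av n x] False unfolding N_def by blast
        have "\<beta> ^ m * N = av (y i)" unfolding y_def \<beta>_def i(2) by (simp add: av_mult av_tpow)
        also have "\<dots> \<le> vnorm av n y" using vnorm_ge[OF i(1)] .
        finally show ?thesis .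
      qed
      have bmN: "\<beta> ^ m * N < M" using m N0 unfolding \<beta>_def by (simp add: field_simps)
      have ypos: "0 < vnorm av n y" using ny2 b0 N0 by (smt (verit) mult_pos_pos)
      have ysmall: "vnorm av n y < \<delta>" "vnorm av n y \<le> \<rho>0" using ny bmN unfolding M_def by auto
      from est(3) yv ypos ysmall(2) have yD: "y \<in> D"
        and E1: "vnorm av c (\<lambda>k. g y k - g zvec k - G y k) \<le> \<kappa> * vnorm av n y ^ 2" by auto
      have E2: "vnorm av c (\<lambda>k. g y k - g zvec k - L y k) \<le> \<epsilon>' * vnorm av n y"
        using \<delta>(2) yv yD ysmall(1) by blast
      have "L y k - G y k = (g y k - g zvec k - G y k) - (g y k - g zvec k - L y k)" by simp
      hence "av (L y k - G y k) \<le> max (vnorm av c (\<lambda>k. g y k - g zvec k - G y k)) (vnorm av c (\<lambda>k. g y k - g zvec k - L y k))"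
        using vnorm_diff_le[OF kc, of "\<lambda>k. g y k - g zvec k - G y k" "\<lambda>k. g y k - g zvec k - L y k"] by simp
      moreover have "L y k - G y k = t ^ m * (L x k - G x k)"
        unfolding y_def using Ls Gs by (simp add: right_diff_distrib)
      ultimately have A: "\<beta> ^ m * av (L x k - G x k) \<le> max (\<kappa> * vnorm av n y ^ 2) (\<epsilon>' * vnorm av n y)"
        using E1 E2 unfolding \<beta>_def by (simp add: av_mult av_tpow)
      have B1: "\<kappa> * vnorm av n y ^ 2 \<le> \<beta> ^ m * \<epsilon>"
      proof -
        have "\<kappa> * vnorm av n y ^ 2 \<le> \<kappa> * (\<beta> ^ m * N) ^ 2"
          using ny est(2) vnorm_nonneg[of av n y] by (intro mult_left_mono power_mono) auto
        also have "\<dots> = \<beta> ^ m * (\<kappa> * N * (\<beta> ^ m * N))" by (simp add: power2_eq_square mult_ac)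
        also have "\<dots> \<le> \<beta> ^ m * (\<kappa> * N * (\<epsilon> / ((\<kappa> + 1) * N)))"
          using bmN b0 est(2) N0 unfolding M_def by (intro mult_left_mono) auto
        also have "\<dots> \<le> \<beta> ^ m * \<epsilon>"
        proof -
          have "\<kappa> * N * (\<epsilon> / ((\<kappa> + 1) * N)) \<le> \<epsilon>" using N0 est(2) e by (simp add: divide_le_eq)
          thus ?thesis using b0 by simp
        qed
        finally show ?thesis .
      qed
      have B2: "\<epsilon>' * vnorm av n y \<le> \<beta> ^ m * \<epsilon>"
      proof -
        have "\<epsilon>' * vnorm av n y \<le> \<epsilon>' * (\<beta> ^ m * N)" using ny e' by simp
        also have "\<dots> = \<beta> ^ m * \<epsilon> / 2" unfolding \<epsilon>'_def using N0 by simp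
        finally have "\<epsilon>' * vnorm av n y \<le> \<beta> ^ m * \<epsilon> / 2" .
        moreover have "\<beta> ^ m * \<epsilon> \<ge> 0" using b0 e by simp
        ultimately show ?thesis by linarith
      qed
      have "\<beta> ^ m * av (L x k - G x k) \<le> \<beta> ^ m * \<epsilon>" using A B1 B2 by simp
      thus ?thesis using b0 by simp
    qed
    thus ?thesis using av_nonneg[of "L x k - G x k"]
      by (metis dual_order.antisym field_lbound_gt_zero less_le_not_le)
  qed
  hence "L x k = G x k" if "k < c" for k using that by simp
  moreover have "L x k = G x k" if "\<not> k < c" for k using Lv Gv that unfolding vecs_def by auto
  ultimately show ?thesis by blast
qed

end

definition Gset :: "nat \<Rightarrow> nat \<Rightarrow> 'a::zero set \<Rightarrow> 'a set \<Rightarrow> ((nat \<Rightarrow> 'a) \<times> (nat \<Rightarrow> 'a)) set" where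
  "Gset a b V W = {(v, w). v \<in> vecs a \<and> (\<forall>i<a. v i \<in> V) \<and> w \<in> vecs b \<and> (\<forall>i<b. w i \<in> W)}"

lemma Gset_diff:
  assumes "\<forall>x\<in>V. \<forall>y\<in>V. x - y \<in> V" "\<forall>x\<in>W. \<forall>y\<in>W. x - y \<in> W"
    "g1 \<in> Gset a b V W" "g2 \<in> Gset a b V W"
  shows "(\<lambda>i. fst g1 i - fst g2 i, \<lambda>i. snd g1 i - snd g2 i) \<in> Gset a b V (W :: 'a::ab_group_add set)"
  using assms unfolding Gset_def vecs_def by auto

lemma Gset_scale:
  assumes "\<forall>x\<in>V. z * x \<in> V" "\<forall>x\<in>W. z * x \<in> W" "g \<in> Gset a b V W"
  shows "(\<lambda>i. z * fst g i, \<lambda>i. z * snd g i) \<in> Gset a b V (W :: 'a::ring set)"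
  using assms unfolding Gset_def vecs_def by auto

definition R0c :: "'a set \<Rightarrow> nat \<Rightarrow> (nat \<Rightarrow> 'a::zero) set" where
  "R0c R c = {y \<in> vecs c. \<forall>k<c. y k \<in> R}"

context vsetup
begin

lemma Lp_diff:
  fixes Lp :: "(nat \<Rightarrow> 'a) \<times> (nat \<Rightarrow> 'a) \<Rightarrow> nat \<Rightarrow> 'a"
  assumes Ladd: "\<forall>h h'. Lp (\<lambda>i. fst h i + fst h' i, \<lambda>i. snd h i + snd h' i) = (\<lambda>k. Lp h k + Lp h' k)"
    and Lsc: "\<forall>x h. Lp (\<lambda>i. x * fst h i, \<lambda>i. x * snd h i) = (\<lambda>k. x * Lp h k)"
  shows "Lp (\<lambda>i. fst g1 i - fst g2 i, \<lambda>i. snd g1 i - snd g2 i) = (\<lambda>k. Lp g1 k - Lp g2 k)"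
proof -
  have "Lp (\<lambda>i. fst g1 i - fst g2 i, \<lambda>i. snd g1 i - snd g2 i) =
        Lp (\<lambda>i. fst g1 i + fst (\<lambda>i. (-1) * fst g2 i, \<lambda>i. (-1) * snd g2 i) i,
            \<lambda>i. snd g1 i + snd (\<lambda>i. (-1) * fst g2 i, \<lambda>i. (-1) * snd g2 i) i)" by simp
  also have "\<dots> = (\<lambda>k. Lp g1 k + Lp (\<lambda>i. (-1) * fst g2 i, \<lambda>i. (-1) * snd g2 i) k)" using Ladd by blast
  also have "\<dots> = (\<lambda>k. Lp g1 k - Lp g2 k)"
  proof -
    have sc: "Lp (\<lambda>i. (-1) * fst g2 i, \<lambda>i. (-1) * snd g2 i) = (\<lambda>k. (-1) * Lp g2 k)" using Lsc by blast
    show ?thesis unfolding sc by simp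
  qed
  finally show ?thesis .
qed

lemma linear_approx:
  fixes Lp :: "(nat \<Rightarrow> 'a) \<times> (nat \<Rightarrow> 'a) \<Rightarrow> nat \<Rightarrow> 'a" and V W :: "'a set"
  assumes Lv: "\<forall>h. Lp h \<in> vecs c"
    and Ladd: "\<forall>h h'. Lp (\<lambda>i. fst h i + fst h' i, \<lambda>i. snd h i + snd h' i) = (\<lambda>k. Lp h k + Lp h' k)"
    and Lsc: "\<forall>x h. Lp (\<lambda>i. x * fst h i, \<lambda>i. x * snd h i) = (\<lambda>k. x * Lp h k)"
    and Vd: "\<forall>x\<in>V. \<forall>y\<in>V. x - y \<in> V" and Wd: "\<forall>x\<in>W. \<forall>y\<in>W. x - y \<in> W"
    and surj: "\<forall>y\<in>R0c R0 c. \<exists>J. \<exists>g\<in>Gset a b V W. Lp g = (\<lambda>k. t ^ J * y k)"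
  shows "\<exists>N. \<forall>y\<in>R0c R0 c. \<exists>g\<in>Gset a b V W. vnorm av c (\<lambda>k. Lp g k - t ^ N * y k) \<le> inverse \<alpha> ^ Suc N"
proof (rule ccontr)
  define \<beta> where "\<beta> = inverse \<alpha>"
  have b0: "\<beta> > 0" "\<beta> < 1" using inv_alpha unfolding \<beta>_def by auto
  define G where "G = Gset a b V W"
  assume "\<not> ?thesis"
  hence bad: "\<forall>N. \<exists>y\<in>R0c R0 c. \<forall>g\<in>G. vnorm av c (\<lambda>k. Lp g k - t ^ N * y k) > \<beta> ^ Suc N"
    unfolding G_def \<beta>_def by (meson not_le)
  define P where "P j z w \<longleftrightarrow> w \<in> R0c R0 c \<and> vnorm av c (\<lambda>k. w k - z k) \<le> \<beta> ^ Suc j \<and>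
      (\<forall>g\<in>G. vnorm av c (\<lambda>k. Lp g k - t ^ j * w k) > \<beta> ^ (2 * j + 2))" for j z w
  have step: "\<exists>w. P j z w" if z: "z \<in> R0c R0 c" for j z
  proof (rule ccontr)
    assume "\<not> (\<exists>w. P j z w)"
    hence nw: "\<forall>w\<in>R0c R0 c. vnorm av c (\<lambda>k. w k - z k) \<le> \<beta> ^ Suc j \<longrightarrow>
        (\<exists>g\<in>G. vnorm av c (\<lambda>k. Lp g k - t ^ j * w k) \<le> \<beta> ^ (2 * j + 2))"
      unfolding P_def by (meson not_le)
    obtain y where y: "y \<in> R0c R0 c" "\<forall>g\<in>G. vnorm av c (\<lambda>k. Lp g k - t ^ (2 * j + 1) * y k) > \<beta> ^ Suc (2 * j + 1)"
      using bad by blast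
    define w1 where "w1 = (\<lambda>k. z k + t ^ Suc j * y k)"
    have "z k + t ^ Suc j * y k \<in> R0" if "k < c" for k
      using z y(1) that R0(3)[OF _ R0(5)[OF tpow_R0]] unfolding R0c_def by blast
    hence w1: "w1 \<in> R0c R0 c" using z y(1) unfolding w1_def R0c_def vecs_def by auto
    have "vnorm av c (\<lambda>k. w1 k - z k) \<le> \<beta> ^ Suc j"
    proof (rule vnorm_le)
      show "0 \<le> \<beta> ^ Suc j" using b0 by simp
      fix k assume "k < c"
      hence "av (y k) \<le> 1" using y(1) R0_av unfolding R0c_def by auto
      moreover have "av (w1 k - z k) = \<beta> ^ Suc j * av (y k)"
        unfolding w1_def \<beta>_def by (simp add: av_mult av_tpow del: power_Suc)
      ultimately show "av (w1 k - z k) \<le> \<beta> ^ Suc j" using b0 by (simp add: mult_left_le)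
    qed
    then obtain g1 where g1: "g1 \<in> G" "vnorm av c (\<lambda>k. Lp g1 k - t ^ j * w1 k) \<le> \<beta> ^ (2 * j + 2)"
      using nw w1 by blast
    have "vnorm av c (\<lambda>k. z k - z k) \<le> \<beta> ^ Suc j" using b0 by (simp add: vnorm_le)
    then obtain g2 where g2: "g2 \<in> G" "vnorm av c (\<lambda>k. Lp g2 k - t ^ j * z k) \<le> \<beta> ^ (2 * j + 2)"
      using nw z by blast
    define g where "g = (\<lambda>i. fst g1 i - fst g2 i, \<lambda>i. snd g1 i - snd g2 i)"
    have gG: "g \<in> G" unfolding g_def G_def using Gset_diff[OF Vd Wd] g1(1) g2(1) unfolding G_def by blast
    have Lg: "Lp g = (\<lambda>k. Lp g1 k - Lp g2 k)" unfolding g_def by (rule Lp_diff[OF Ladd Lsc])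
    have "vnorm av c (\<lambda>k. Lp g k - t ^ (2 * j + 1) * y k) \<le> \<beta> ^ (2 * j + 2)"
    proof (rule vnorm_le)
      show "0 \<le> \<beta> ^ (2 * j + 2)" using b0 by simp
      fix k assume kc: "k < c"
      have "2 * j + 1 = j + Suc j" by simp
      hence tp: "t ^ (2 * j + 1) = t ^ j * t ^ Suc j" by (metis power_add)
      have "Lp g k - t ^ (2 * j + 1) * y k = (Lp g1 k - t ^ j * w1 k) - (Lp g2 k - t ^ j * z k)"
        unfolding Lg w1_def tp by (simp add: algebra_simps)
      hence "av (Lp g k - t ^ (2 * j + 1) * y k) \<le> max (vnorm av c (\<lambda>k. Lp g1 k - t ^ j * w1 k)) (vnorm av c (\<lambda>k. Lp g2 k - t ^ j * z k))"
        using vnorm_diff_le[OF kc, of "\<lambda>k. Lp g1 k - t ^ j * w1 k" "\<lambda>k. Lp g2 k - t ^ j * z k"] by simp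
      thus "av (Lp g k - t ^ (2 * j + 1) * y k) \<le> \<beta> ^ (2 * j + 2)" using g1(2) g2(2) by simp
    qed
    moreover have "vnorm av c (\<lambda>k. Lp g k - t ^ (2 * j + 1) * y k) > \<beta> ^ (2 * j + 2)"
      using y(2) gG by simp
    ultimately show False by simp
  qed
  define zs where "zs = rec_nat (zvec :: nat \<Rightarrow> 'a) (\<lambda>j z. SOME w. P j z w)"
  have zs0: "zs 0 = zvec" and zsS: "zs (Suc j) = (SOME w. P j (zs j) w)" for j
    unfolding zs_def by simp_all
  have zsR: "zs j \<in> R0c R0 c \<and> P j (zs j) (zs (Suc j))" for j
  proof (induction j)
    case 0
    have "zs 0 \<in> R0c R0 c" unfolding zs0 R0c_def vecs_def zvec_def using R0 by auto
    thus ?case unfolding zsS using someI_ex[OF step] by blast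
  next
    case (Suc j)
    hence "zs (Suc j) \<in> R0c R0 c" unfolding P_def by blast
    thus ?case using zsS[of "Suc j"] someI_ex[OF step] by metis
  qed
  have lim: "\<exists>x\<in>R0. \<forall>m. av (x - zs m k) \<le> \<beta> ^ Suc m" if kc: "k < c" for k
  proof (rule good_limit[OF good_R0, unfolded \<beta>_def[symmetric]])
    show "zs m k \<in> R0" for m using zsR[of m] kc unfolding R0c_def by auto
    show "av (zs (Suc m) k - zs m k) \<le> \<beta> ^ Suc m" for m
      using zsR[of m] vnorm_ge[OF kc, of av "\<lambda>k. zs (Suc m) k - zs m k"] unfolding P_def by simp
  qed
  define y where "y = (\<lambda>k. if k < c then (SOME x. x \<in> R0 \<and> (\<forall>m. av (x - zs m k) \<le> \<beta> ^ Suc m)) else 0)"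
  have yk: "y k \<in> R0 \<and> (\<forall>m. av (y k - zs m k) \<le> \<beta> ^ Suc m)" if "k < c" for k
    using someI_ex[OF lim[OF that, unfolded Bex_def]] that unfolding y_def by simp
  have yR: "y \<in> R0c R0 c" unfolding R0c_def vecs_def using yk by (auto simp: y_def)
  obtain J g where g: "g \<in> G" "Lp g = (\<lambda>k. t ^ J * y k)" using surj yR unfolding G_def by blast
  have "vnorm av c (\<lambda>k. Lp g k - t ^ J * zs (Suc J) k) > \<beta> ^ (2 * J + 2)"
    using zsR[of J] g(1) unfolding P_def by blast
  moreover have "vnorm av c (\<lambda>k. Lp g k - t ^ J * zs (Suc J) k) \<le> \<beta> ^ (2 * J + 2)"
  proof (rule vnorm_le)
    show "0 \<le> \<beta> ^ (2 * J + 2)" using b0 by simp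
    fix k assume kc: "k < c"
    have "Lp g k - t ^ J * zs (Suc J) k = t ^ J * (y k - zs (Suc J) k)" unfolding g(2) by (simp add: algebra_simps)
    hence "av (Lp g k - t ^ J * zs (Suc J) k) = \<beta> ^ J * av (y k - zs (Suc J) k)"
      unfolding \<beta>_def by (simp add: av_mult av_tpow)
    also have "\<dots> \<le> \<beta> ^ J * \<beta> ^ Suc (Suc J)" using yk[OF kc] b0 by (intro mult_left_mono) (auto simp del: power_Suc)
    also have "\<dots> = \<beta> ^ (2 * J + 2)"
    proof -
      have "2 * J + 2 = J + Suc (Suc J)" by simp
      thus ?thesis by (metis power_add)
    qed
    finally show "av (Lp g k - t ^ J * zs (Suc J) k) \<le> \<beta> ^ (2 * J + 2)" .
  qed
  ultimately show False by simp
qed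

end

context vsetup
begin

lemma Gset_R0: "g \<in> Gset a b V W \<Longrightarrow> V \<subseteq> R0 \<Longrightarrow> W \<subseteq> R0 \<Longrightarrow> pnorm av a b g \<le> 1"
  unfolding Gset_def using R0_av by (subst pnorm_le_iff) auto

lemma approx_solve:
  fixes Lp :: "(nat \<Rightarrow> 'a) \<times> (nat \<Rightarrow> 'a) \<Rightarrow> nat \<Rightarrow> 'a" and V W :: "'a set"
  assumes Lv: "\<forall>h. Lp h \<in> vecs c"
    and Lsc: "\<forall>x h. Lp (\<lambda>i. x * fst h i, \<lambda>i. x * snd h i) = (\<lambda>k. x * Lp h k)"
    and VR: "V \<subseteq> R0" and WR: "W \<subseteq> R0" and V0: "0 \<in> V" and W0: "0 \<in> W"
    and Vt: "\<forall>x\<in>V. t * x \<in> V" and Wt: "\<forall>x\<in>W. t * x \<in> W"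
    and N: "\<forall>y\<in>R0c R0 c. \<exists>g\<in>Gset a b V W. vnorm av c (\<lambda>k. Lp g k - t ^ N * y k) \<le> inverse \<alpha> ^ Suc N"
    and e: "e \<in> vecs c" "vnorm av c e \<le> inverse \<alpha> ^ N"
  shows "\<exists>h\<in>Gset a b V W. pnorm av a b h \<le> vnorm av c e / inverse \<alpha> ^ N \<and>
           vnorm av c (\<lambda>k. Lp h k - e k) \<le> inverse \<alpha> * vnorm av c e"
proof -
  define \<beta> where "\<beta> = inverse \<alpha>"
  have b0: "\<beta> > 0" "\<beta> < 1" using inv_alpha unfolding \<beta>_def by auto
  have Vtn: "\<forall>x\<in>V. t ^ n * x \<in> V" for n
    by (induction n) (use Vt in \<open>auto simp: mult.assoc\<close>)
  have Wtn: "\<forall>x\<in>W. t ^ n * x \<in> W" for n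
    by (induction n) (use Wt in \<open>auto simp: mult.assoc\<close>)
  show ?thesis
  proof (cases "vnorm av c e = 0")
    case True
    have ez: "e = zvec" using zvec_eq[OF e(1) True] .
    have zG: "(zvec, zvec) \<in> Gset a b V W" unfolding Gset_def vecs_def zvec_def using V0 W0 by auto
    have "Lp (\<lambda>i. 0 * fst (zvec, zvec) i, \<lambda>i. 0 * snd (zvec, zvec) i) = (\<lambda>k. 0 * Lp (zvec, zvec) k)"
      using spec[OF spec[OF Lsc, of 0], of "(zvec, zvec)"] by simp
    hence L0: "Lp (zvec, zvec) = zvec" unfolding zvec_def by simp
    have "pnorm av a b (zvec, zvec) \<le> 0" by (subst pnorm_le_iff) (auto simp: zvec_def)
    moreover have "vnorm av c (\<lambda>k. Lp (zvec, zvec) k - e k) \<le> inverse \<alpha> * vnorm av c e"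
    proof -
      have z: "vnorm av c (\<lambda>_::nat. 0::'a) = 0" using vnorm_eq_0 by simp
      have L0': "Lp (\<lambda>_. 0, \<lambda>_. 0) = (\<lambda>_. 0)" using L0 unfolding zvec_def .
      show ?thesis unfolding ez zvec_def L0' using z by simp
    qed
    ultimately show ?thesis using zG True by (intro bexI[of _ "(zvec, zvec)"]) auto
  next
    case False
    obtain i where i: "i < c" "vnorm av c e = av (e i)" using vnorm_cases[of av c e] False by blast
    have ei: "e i \<noteq> 0" using False i by auto
    have "av (e i) \<le> 1" using e(2) i(2) b0 unfolding \<beta>_def by (smt (verit) power_le_one)
    then obtain n where n: "av (e i) = \<beta> ^ n" using av_exact[OF ei] unfolding \<beta>_def by blast
    have "\<beta> ^ n \<le> \<beta> ^ N" using e(2) i(2) n unfolding \<beta>_def by simp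
    hence nN: "N \<le> n" using b0 by (simp add: power_decreasing_iff)
    have tn: "t ^ n \<noteq> 0" using t_nz by simp
    define y where "y = (\<lambda>k. e k / t ^ n)"
    have yR: "y \<in> R0c R0 c"
    proof -
      have "av (y k) \<le> 1" if "k < c" for k
      proof -
        have "av (e k) \<le> \<beta> ^ n" using vnorm_ge[OF that, of av e] i(2) n by simp
        thus ?thesis unfolding y_def av_divide av_tpow \<beta>_def[symmetric] using b0 by simp
      qed
      moreover have "y \<in> vecs c" using e(1) unfolding y_def vecs_def by simp
      ultimately show ?thesis unfolding R0c_def using R0_av by blast
    qed
    obtain g where g: "g \<in> Gset a b V W" "vnorm av c (\<lambda>k. Lp g k - t ^ N * y k) \<le> \<beta> ^ Suc N"
      using N yR unfolding \<beta>_def by blast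
    define h where "h = (\<lambda>i. t ^ (n - N) * fst g i, \<lambda>i. t ^ (n - N) * snd g i)"
    have hG: "h \<in> Gset a b V W" unfolding h_def by (rule Gset_scale) (use Vtn Wtn g(1) in auto)
    have gn: "pnorm av a b g \<le> 1" using Gset_R0[OF g(1) VR WR] .
    have bn: "\<beta> ^ (n - N) = \<beta> ^ n / \<beta> ^ N" using nN b0 by (simp add: power_diff)
    have hn: "pnorm av a b h \<le> \<beta> ^ (n - N)"
    proof (subst pnorm_le_iff)
      show "0 \<le> \<beta> ^ (n - N)" using b0 by simp
      have "av (fst g j) \<le> 1" if "j < a" for j using pnorm_coord[OF that, of g b] gn by simp
      moreover have "av (snd g j) \<le> 1" if "j < b" for j using pnorm_coord2[OF that, of g a] gn by simp
      ultimately show "(\<forall>j<a. av (fst h j) \<le> \<beta> ^ (n - N)) \<and> (\<forall>j<b. av (snd h j) \<le> \<beta> ^ (n - N))"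
        unfolding h_def \<beta>_def using inv_alpha by (auto simp: av_mult av_tpow mult_left_le)
    qed
    have Lh: "Lp h = (\<lambda>k. t ^ (n - N) * Lp g k)" unfolding h_def by (rule Lsc[rule_format])
    have ek: "e k = t ^ (n - N) * (t ^ N * y k)" for k
    proof -
      have "t ^ (n - N) * t ^ N = t ^ n" using nN by (simp add: power_add[symmetric])
      thus ?thesis unfolding y_def using tn by (simp add: mult.assoc[symmetric])
    qed
    have "vnorm av c (\<lambda>k. Lp h k - e k) \<le> \<beta> ^ (n - N) * \<beta> ^ Suc N"
    proof (rule vnorm_le)
      show "0 \<le> \<beta> ^ (n - N) * \<beta> ^ Suc N" using b0 by simp
      fix k assume kc: "k < c"
      have "Lp h k - e k = t ^ (n - N) * (Lp g k - t ^ N * y k)" unfolding Lh ek by (simp add: right_diff_distrib)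
      hence "av (Lp h k - e k) = \<beta> ^ (n - N) * av (Lp g k - t ^ N * y k)"
        unfolding \<beta>_def by (simp add: av_mult av_tpow)
      also have "\<dots> \<le> \<beta> ^ (n - N) * \<beta> ^ Suc N"
        using vnorm_ge[OF kc, of av "\<lambda>k. Lp g k - t ^ N * y k"] g(2) b0 by (intro mult_left_mono) auto
      finally show "av (Lp h k - e k) \<le> \<beta> ^ (n - N) * \<beta> ^ Suc N" .
    qed
    moreover have "\<beta> ^ (n - N) * \<beta> ^ Suc N = \<beta> * vnorm av c e"
    proof -
      have "n - N + Suc N = Suc n" using nN by simp
      hence "\<beta> ^ (n - N) * \<beta> ^ Suc N = \<beta> ^ Suc n" by (metis power_add)
      thus ?thesis using i(2) n by simp
    qed
    moreover have "\<beta> ^ (n - N) = vnorm av c e / \<beta> ^ N" using bn i(2) n by simp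
    ultimately show ?thesis using hG hn unfolding \<beta>_def by auto
  qed
qed

end

lemma Gset_add:
  assumes "\<forall>x\<in>V. \<forall>y\<in>V. x + y \<in> V" "\<forall>x\<in>W. \<forall>y\<in>W. x + y \<in> W"
    "g1 \<in> Gset a b V W" "g2 \<in> Gset a b V W"
  shows "(\<lambda>i. fst g1 i + fst g2 i, \<lambda>i. snd g1 i + snd g2 i) \<in> Gset a b V (W :: 'a::monoid_add set)"
  using assms unfolding Gset_def vecs_def by auto

context vsetup
begin

lemma zero_from_bound:
  assumes "X \<ge> 0" "K \<ge> 0" "\<And>k. X \<le> K * inverse \<alpha> ^ k"
  shows "X = 0"
proof (rule ccontr)
  assume "X \<noteq> 0"
  hence X0: "X > 0" using assms(1) by simp
  obtain k where k: "inverse \<alpha> ^ k < X / (K + 1)" using small_pow[of "X / (K + 1)"] X0 assms(2) by auto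
  have "X \<le> K * inverse \<alpha> ^ k" by (rule assms(3))
  also have "\<dots> \<le> (K + 1) * inverse \<alpha> ^ k" using inv_alpha by (simp add: mult_right_mono)
  also have "\<dots> < X" using k assms(2) by (simp add: field_simps)
  finally show False by simp
qed

lemma newton:
  fixes Lp :: "(nat \<Rightarrow> 'a) \<times> (nat \<Rightarrow> 'a) \<Rightarrow> nat \<Rightarrow> 'a" and V W :: "'a set"
    and f :: "(nat \<Rightarrow> 'a) \<Rightarrow> (nat \<Rightarrow> 'a) \<Rightarrow> (nat \<Rightarrow> 'a)"
  assumes gV: "good V" and gW: "good W"
    and Vadd: "\<forall>x\<in>V. \<forall>y\<in>V. x + y \<in> V" and Wadd: "\<forall>x\<in>W. \<forall>y\<in>W. x + y \<in> W"
    and V0: "0 \<in> V" and W0: "0 \<in> W" and Vt: "\<forall>x\<in>V. t * x \<in> V" and Wt: "\<forall>x\<in>W. t * x \<in> W"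
    and Lv: "\<forall>h. Lp h \<in> vecs c"
    and Ladd: "\<forall>h h'. Lp (\<lambda>i. fst h i + fst h' i, \<lambda>i. snd h i + snd h' i) = (\<lambda>k. Lp h k + Lp h' k)"
    and Lsc: "\<forall>x h. Lp (\<lambda>i. x * fst h i, \<lambda>i. x * snd h i) = (\<lambda>k. x * Lp h k)"
    and \<Lambda>: "\<Lambda> \<ge> 0" "\<forall>h. vnorm av c (Lp h) \<le> \<Lambda> * pnorm av a b h"
    and \<rho>0: "\<rho>0 > 0" and \<kappa>: "\<kappa> \<ge> 0"
    and dom: "\<forall>q\<in>vecs a \<times> vecs b. pnorm av a b q \<le> \<rho>0 \<longrightarrow> q \<in> \<Omega>"
    and est: "\<forall>\<rho> q q'. 0 < \<rho> \<and> \<rho> \<le> \<rho>0 \<and> q \<in> vecs a \<times> vecs b \<and> q' \<in> vecs a \<times> vecs b \<and>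
        pnorm av a b q \<le> \<rho> \<and> pnorm av a b q' \<le> \<rho> \<longrightarrow>
        vnorm av c (\<lambda>k. f (fst q') (snd q') k - f (fst q) (snd q) k - (Lp q' k - Lp q k))
          \<le> \<kappa> * \<rho> * pnorm av a b (vdiff (fst q') (fst q), vdiff (snd q') (snd q))"
    and fv: "\<forall>q\<in>\<Omega>. f (fst q) (snd q) \<in> vecs c"
    and f0: "f zvec zvec = zvec"
    and N: "\<forall>y\<in>R0c R0 c. \<exists>g\<in>Gset a b V W. vnorm av c (\<lambda>k. Lp g k - t ^ N * y k) \<le> inverse \<alpha> ^ Suc N"
  shows "\<exists>\<epsilon>>0. \<forall>y\<in>vecs c. vnorm av c y \<le> \<epsilon> \<longrightarrow>
           (\<exists>v w. v \<in> vecs a \<and> (\<forall>i<a. v i \<in> V) \<and> w \<in> vecs b \<and> (\<forall>i<b. w i \<in> W) \<and>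
                  (v, w) \<in> \<Omega> \<and> f v w = y)"
proof -
  define \<beta> where "\<beta> = inverse \<alpha>"
  have b0: "\<beta> > 0" "\<beta> < 1" using inv_alpha unfolding \<beta>_def by auto
  have bN: "\<beta> ^ N > 0" using b0 by simp
  obtain m where m: "\<beta> ^ m < min \<rho>0 (\<beta> ^ Suc N / (\<kappa> + 1))"
    using small_pow[of "min \<rho>0 (\<beta> ^ Suc N / (\<kappa> + 1))"] \<rho>0 \<kappa> b0 unfolding \<beta>_def by auto
  define R where "R = \<beta> ^ Suc m"
  have R0': "R > 0" unfolding R_def using b0 by simp
  have Rm: "R \<le> \<beta> ^ m" unfolding R_def using b0 by (simp add: mult_left_le_one_le)
  have R\<rho>: "R \<le> \<rho>0" using Rm m by simp
  have R\<beta>: "R \<le> \<beta>" unfolding R_def using b0 by (simp add: mult_left_le power_le_one)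
  have R1: "R \<le> 1" using R\<beta> b0 by simp
  have \<kappa>R: "\<kappa> * R \<le> \<beta> ^ Suc N"
  proof -
    have "\<kappa> * R \<le> \<kappa> * (\<beta> ^ Suc N / (\<kappa> + 1))" using Rm m \<kappa> by (intro mult_left_mono) auto
    also have "\<dots> \<le> \<beta> ^ Suc N" using \<kappa> b0 by (simp add: divide_le_eq)
    finally show ?thesis .
  qed
  define \<epsilon> where "\<epsilon> = R * \<beta> ^ N"
  have e0: "\<epsilon> > 0" unfolding \<epsilon>_def using R0' bN by simp
  have eN: "\<epsilon> \<le> \<beta> ^ N" unfolding \<epsilon>_def using R1 bN by (simp add: mult_left_le_one_le)
  define G where "G = Gset a b V W"
  have GV: "g \<in> vecs a \<times> vecs b" if "g \<in> G" for g using that unfolding G_def Gset_def by auto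
  show ?thesis
  proof (intro exI[of _ \<epsilon>] conjI e0 ballI impI)
    fix y assume yv: "y \<in> vecs c" and yn: "vnorm av c y \<le> \<epsilon>"
    define F where "F q = f (fst q) (snd q)" for q
    define P where "P e h \<longleftrightarrow> h \<in> G \<and> pnorm av a b h \<le> vnorm av c e / \<beta> ^ N \<and>
        vnorm av c (\<lambda>k. Lp h k - e k) \<le> \<beta> * vnorm av c e" for e h
    have Hex: "\<exists>h. P e h" if "e \<in> vecs c" "vnorm av c e \<le> \<beta> ^ N" for e
      using approx_solve[OF Lv Lsc goodD(1)[OF gV] goodD(1)[OF gW] V0 W0 Vt Wt N that[unfolded \<beta>_def]]
      unfolding P_def G_def \<beta>_def by blast
    define H where "H e = (SOME h. P e h)" for e
    define padd where "padd g h = (\<lambda>i. fst g i + fst h i, \<lambda>i. snd g i + snd h i)"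
      for g h :: "(nat \<Rightarrow> 'a) \<times> (nat \<Rightarrow> 'a)"
    define E where "E g = (\<lambda>j. y j - F g j)" for g
    define gs where "gs = rec_nat (zvec, zvec) (\<lambda>k g. padd g (H (E g)))"
    have gs0: "gs 0 = (zvec, zvec)" and gsS: "gs (Suc k) = padd (gs k) (H (E (gs k)))" for k
      unfolding gs_def by simp_all
    define Inv where "Inv k \<longleftrightarrow> gs k \<in> G \<and> pnorm av a b (gs k) \<le> R \<and> E (gs k) \<in> vecs c \<and>
        vnorm av c (E (gs k)) \<le> \<beta> ^ k * vnorm av c y" for k
    have yn0: "vnorm av c y \<ge> 0" by (rule vnorm_nonneg)
    have Gdom: "g \<in> \<Omega>" if "g \<in> G" "pnorm av a b g \<le> R" for g
      using dom GV[OF that(1)] that(2) R\<rho> by auto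
    have inv_step: "Inv (Suc k) \<and> P (E (gs k)) (H (E (gs k)))" if IH: "Inv k" for k
    proof -
      have gk: "gs k \<in> G" "pnorm av a b (gs k) \<le> R" "E (gs k) \<in> vecs c" "vnorm av c (E (gs k)) \<le> \<beta> ^ k * vnorm av c y"
        using IH unfolding Inv_def by auto
      define e where "e = E (gs k)"
      have "\<beta> ^ k * vnorm av c y \<le> vnorm av c y" using b0 yn0 by (simp add: mult_left_le_one_le power_le_one)
      hence en: "vnorm av c e \<le> vnorm av c y" using gk(4) unfolding e_def by simp
      have eN': "vnorm av c e \<le> \<beta> ^ N" using en yn eN by simp
      have Ph: "P e (H e)" unfolding H_def by (rule someI_ex[OF Hex[OF _ eN']]) (use gk(3) e_def in simp)
      define h where "h = H e"
      have hG: "h \<in> G" and hn: "pnorm av a b h \<le> vnorm av c e / \<beta> ^ N"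
        and hL: "vnorm av c (\<lambda>k. Lp h k - e k) \<le> \<beta> * vnorm av c e"
        using Ph unfolding P_def h_def by auto
      have hR: "pnorm av a b h \<le> R"
      proof -
        have "vnorm av c e / \<beta> ^ N \<le> \<epsilon> / \<beta> ^ N" using en yn bN by (simp add: divide_right_mono)
        also have "\<dots> = R" unfolding \<epsilon>_def using bN b0 by simp
        finally show ?thesis using hn by simp
      qed
      define g where "g = gs k"
      define g' where "g' = padd g h"
      have gsk: "gs (Suc k) = g'" unfolding g'_def g_def gsS e_def h_def ..
      have g'G: "g' \<in> G" unfolding g'_def padd_def G_def
        by (rule Gset_add[OF Vadd Wadd]) (use gk(1) hG in \<open>auto simp: g_def G_def\<close>)
      have g'R: "pnorm av a b g' \<le> R"
      proof (subst pnorm_le_iff)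
        show "0 \<le> R" using R0' by simp
        have "av (fst g i + fst h i) \<le> R" if "i < a" for i
          using av_add[of "fst g i" "fst h i"] pnorm_coord[OF that, of g b] pnorm_coord[OF that, of h b] gk(2) hR
          unfolding g_def by simp
        moreover have "av (snd g i + snd h i) \<le> R" if "i < b" for i
          using av_add[of "snd g i" "snd h i"] pnorm_coord2[OF that, of g a] pnorm_coord2[OF that, of h a] gk(2) hR
          unfolding g_def by simp
        ultimately show "(\<forall>i<a. av (fst g' i) \<le> R) \<and> (\<forall>i<b. av (snd g' i) \<le> R)"
          unfolding g'_def padd_def by simp
      qed
      have gG: "g \<in> G" "pnorm av a b g \<le> R" using gk unfolding g_def by auto
      have E'v: "E g' \<in> vecs c" using yv fv Gdom[OF g'G g'R] unfolding E_def F_def vecs_def by auto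
      have Lg': "Lp g' = (\<lambda>j. Lp g j + Lp h j)" unfolding g'_def padd_def by (rule Ladd[rule_format])
      have vd: "(vdiff (fst g') (fst g), vdiff (snd g') (snd g)) = h"
        unfolding g'_def padd_def vdiff_def by simp
      have E1: "vnorm av c (\<lambda>j. F g' j - F g j - (Lp g' j - Lp g j)) \<le> \<kappa> * R * pnorm av a b h"
        using est[rule_format, of R g g'] R0' R\<rho> GV[OF gG(1)] GV[OF g'G] gG(2) g'R unfolding vd F_def by auto
      have E2: "\<kappa> * R * pnorm av a b h \<le> \<beta> * vnorm av c e"
      proof -
        have "\<kappa> * R * pnorm av a b h \<le> \<beta> ^ Suc N * (vnorm av c e / \<beta> ^ N)"
          using \<kappa>R hn \<kappa> R0' pnorm_nonneg[of av a b h] b0 by (intro mult_mono) auto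
        also have "\<dots> = \<beta> * vnorm av c e" using bN b0 by simp
        finally show ?thesis .
      qed
      have bound: "vnorm av c (E g') \<le> \<beta> * vnorm av c e"
      proof (rule vnorm_le)
        show "0 \<le> \<beta> * vnorm av c e" using b0 vnorm_nonneg[of av c e] by simp
        fix j assume jc: "j < c"
        have "E g' j = (e j - Lp h j) - (F g' j - F g j - (Lp g' j - Lp g j))"
          unfolding e_def E_def Lg' g_def by simp
        hence "av (E g' j) \<le> max (av (e j - Lp h j)) (av (F g' j - F g j - (Lp g' j - Lp g j)))"
          using av_diff by metis
        moreover have "av (e j - Lp h j) \<le> \<beta> * vnorm av c e"
          using vnorm_ge[OF jc, of av "\<lambda>k. Lp h k - e k"] hL av_minus_commute[of "e j" "Lp h j"] by simp
        moreover have "av (F g' j - F g j - (Lp g' j - Lp g j)) \<le> \<beta> * vnorm av c e"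
          using vnorm_ge[OF jc, of av "\<lambda>j. F g' j - F g j - (Lp g' j - Lp g j)"] E1 E2 by simp
        ultimately show "av (E g' j) \<le> \<beta> * vnorm av c e" by simp
      qed
      have "vnorm av c (E g') \<le> \<beta> ^ Suc k * vnorm av c y"
        using bound gk(4) b0 unfolding e_def by (smt (verit) mult_left_mono power_Suc mult.assoc)
      hence "Inv (Suc k)" unfolding Inv_def gsk using g'G g'R E'v by simp
      thus ?thesis using Ph unfolding e_def by simp
    qed
    have inv: "Inv k" for k
    proof (induction k)
      case 0
      have "(zvec, zvec) \<in> G" unfolding G_def Gset_def vecs_def zvec_def using V0 W0 by auto
      moreover have "pnorm av a b (zvec, zvec) \<le> R" using R0' by (subst pnorm_le_iff) (auto simp: zvec_def)
      moreover have "E (zvec, zvec) = y" unfolding E_def F_def by (simp add: f0) (simp add: zvec_def)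
      ultimately show ?case unfolding Inv_def gs0 using yv by simp
    next
      case (Suc k) thus ?case using inv_step by blast
    qed
    have stepb: "pnorm av a b (vdiff (fst (gs (Suc k))) (fst (gs k)), vdiff (snd (gs (Suc k))) (snd (gs k))) \<le> \<beta> ^ Suc k" for k
    proof -
      have "P (E (gs k)) (H (E (gs k)))" using inv_step[OF inv[of k]] by simp
      hence hn: "pnorm av a b (H (E (gs k))) \<le> vnorm av c (E (gs k)) / \<beta> ^ N" unfolding P_def by simp
      have "vnorm av c (E (gs k)) \<le> \<beta> ^ k * \<epsilon>"
        using inv[of k] yn b0 unfolding Inv_def by (smt (verit) mult_left_mono zero_le_power)
      hence "vnorm av c (E (gs k)) / \<beta> ^ N \<le> \<beta> ^ k * \<epsilon> / \<beta> ^ N" using bN by (simp add: divide_right_mono)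
      also have "\<dots> = \<beta> ^ k * R" unfolding \<epsilon>_def using bN b0 by simp
      also have "\<dots> \<le> \<beta> ^ k * \<beta>" using R\<beta> b0 by simp
      finally have "pnorm av a b (H (E (gs k))) \<le> \<beta> ^ Suc k" using hn by (simp add: mult.commute)
      moreover have "(vdiff (fst (gs (Suc k))) (fst (gs k)), vdiff (snd (gs (Suc k))) (snd (gs k))) = H (E (gs k))"
        unfolding gsS padd_def vdiff_def by simp
      ultimately show ?thesis by simp
    qed
    have gsG: "gs m \<in> G" "pnorm av a b (gs m) \<le> R" "E (gs m) \<in> vecs c" "vnorm av c (E (gs m)) \<le> \<beta> ^ m * vnorm av c y" for m
      using inv[of m] unfolding Inv_def by auto
    have limV: "\<exists>x\<in>V. \<forall>m. av (x - fst (gs m) i) \<le> \<beta> ^ Suc m" if ia: "i < a" for i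
    proof (rule good_limit[OF gV, unfolded \<beta>_def[symmetric]])
      show "fst (gs m) i \<in> V" for m using gsG(1)[of m] ia unfolding G_def Gset_def by auto
      show "av (fst (gs (Suc m)) i - fst (gs m) i) \<le> \<beta> ^ Suc m" for m
        using pnorm_coord[OF ia, of "(vdiff (fst (gs (Suc m))) (fst (gs m)), vdiff (snd (gs (Suc m))) (snd (gs m)))" b] stepb[of m]
        unfolding vdiff_def by simp
    qed
    have limW: "\<exists>x\<in>W. \<forall>m. av (x - snd (gs m) i) \<le> \<beta> ^ Suc m" if ib: "i < b" for i
    proof (rule good_limit[OF gW, unfolded \<beta>_def[symmetric]])
      show "snd (gs m) i \<in> W" for m using gsG(1)[of m] ib unfolding G_def Gset_def by auto
      show "av (snd (gs (Suc m)) i - snd (gs m) i) \<le> \<beta> ^ Suc m" for m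
        using pnorm_coord2[OF ib, of "(vdiff (fst (gs (Suc m))) (fst (gs m)), vdiff (snd (gs (Suc m))) (snd (gs m)))" a] stepb[of m]
        unfolding vdiff_def by simp
    qed
    define v where "v = (\<lambda>i. if i < a then (SOME x. x \<in> V \<and> (\<forall>m. av (x - fst (gs m) i) \<le> \<beta> ^ Suc m)) else 0)"
    define w where "w = (\<lambda>i. if i < b then (SOME x. x \<in> W \<and> (\<forall>m. av (x - snd (gs m) i) \<le> \<beta> ^ Suc m)) else 0)"
    have vi: "v i \<in> V \<and> (\<forall>m. av (v i - fst (gs m) i) \<le> \<beta> ^ Suc m)" if "i < a" for i
      using someI_ex[OF limV[OF that, unfolded Bex_def]] that unfolding v_def by simp
    have wi: "w i \<in> W \<and> (\<forall>m. av (w i - snd (gs m) i) \<le> \<beta> ^ Suc m)" if "i < b" for i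
      using someI_ex[OF limW[OF that, unfolded Bex_def]] that unfolding w_def by simp
    have vv: "v \<in> vecs a" unfolding v_def vecs_def by simp
    have wv: "w \<in> vecs b" unfolding w_def vecs_def by simp
    have vwG: "(v, w) \<in> G" unfolding G_def Gset_def using vv wv vi wi by auto
    have vwR: "pnorm av a b (v, w) \<le> R"
    proof (subst pnorm_le_iff)
      show "0 \<le> R" using R0' by simp
      have "av (v i) \<le> R" if ia: "i < a" for i
      proof -
        have "v i = (v i - fst (gs m) i) + fst (gs m) i" by simp
        hence "av (v i) \<le> max (av (v i - fst (gs m) i)) (av (fst (gs m) i))" using av_add by metis
        moreover have "av (v i - fst (gs m) i) \<le> R" using vi[OF ia] unfolding R_def by blast
        moreover have "av (fst (gs m) i) \<le> R" using pnorm_coord[OF ia, of "gs m" b] gsG(2)[of m] by simp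
        ultimately show ?thesis by simp
      qed
      moreover have "av (w i) \<le> R" if ib: "i < b" for i
      proof -
        have "w i = (w i - snd (gs m) i) + snd (gs m) i" by simp
        hence "av (w i) \<le> max (av (w i - snd (gs m) i)) (av (snd (gs m) i))" using av_add by metis
        moreover have "av (w i - snd (gs m) i) \<le> R" using wi[OF ib] unfolding R_def by blast
        moreover have "av (snd (gs m) i) \<le> R" using pnorm_coord2[OF ib, of "gs m" a] gsG(2)[of m] by simp
        ultimately show ?thesis by simp
      qed
      ultimately show "(\<forall>i<a. av (fst (v, w) i) \<le> R) \<and> (\<forall>i<b. av (snd (v, w) i) \<le> R)" by simp
    qed
    have vw\<Omega>: "(v, w) \<in> \<Omega>" using Gdom[OF vwG vwR] .
    have close: "pnorm av a b (vdiff v (fst (gs k)), vdiff w (snd (gs k))) \<le> \<beta> ^ Suc k" for k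
      using vi wi b0 unfolding vdiff_def by (subst pnorm_le_iff) auto
    define K where "K = vnorm av c y + \<Lambda> + \<kappa> * R"
    have K0: "K \<ge> 0" unfolding K_def using yn0 \<Lambda>(1) \<kappa> R0' by simp
    have fy: "f v w j = y j" if jc: "j < c" for j
    proof -
      have "av (y j - f v w j) \<le> K * \<beta> ^ k" for k
      proof -
        define q where "q = gs k"
        define d where "d = (vdiff v (fst q), vdiff w (snd q))"
        have dn: "pnorm av a b d \<le> \<beta> ^ k"
          using close[of k] b0 unfolding d_def q_def by (smt (verit) mult_left_le_one_le power_Suc zero_le_power)
        have Ld: "Lp (v, w) j - Lp q j = Lp d j"
          using Lp_diff[OF Ladd Lsc, of "(v, w)" q] unfolding d_def vdiff_def by (metis fst_conv snd_conv)
        have eq: "y j - f v w j = E q j - (F (v, w) j - F q j - (Lp (v, w) j - Lp q j)) - Lp d j"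
          unfolding E_def F_def Ld[symmetric] by simp
        have A: "av (E q j) \<le> K * \<beta> ^ k"
        proof -
          have "av (E q j) \<le> \<beta> ^ k * vnorm av c y" using vnorm_ge[OF jc, of av "E q"] gsG(4)[of k] unfolding q_def by simp
          also have "\<dots> \<le> \<beta> ^ k * K" unfolding K_def using \<Lambda>(1) \<kappa> R0' b0 by (intro mult_left_mono) auto
          finally show ?thesis by (simp add: mult.commute)
        qed
        have B: "av (F (v, w) j - F q j - (Lp (v, w) j - Lp q j)) \<le> K * \<beta> ^ k"
        proof -
          have "vnorm av c (\<lambda>j. F (v, w) j - F q j - (Lp (v, w) j - Lp q j)) \<le> \<kappa> * R * pnorm av a b d"
            using est[rule_format, of R q "(v, w)"] R0' R\<rho> GV[OF gsG(1)[of k]] GV[OF vwG] gsG(2)[of k] vwR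
            unfolding d_def q_def F_def by auto
          also have "\<dots> \<le> \<kappa> * R * \<beta> ^ k" using dn \<kappa> R0' by (intro mult_left_mono) auto
          also have "\<dots> \<le> K * \<beta> ^ k" unfolding K_def using yn0 \<Lambda>(1) b0 by (intro mult_right_mono) auto
          finally show ?thesis using vnorm_ge[OF jc, of av "\<lambda>j. F (v, w) j - F q j - (Lp (v, w) j - Lp q j)"] by simp
        qed
        have C: "av (Lp d j) \<le> K * \<beta> ^ k"
        proof -
          have "av (Lp d j) \<le> \<Lambda> * pnorm av a b d" using vnorm_ge[OF jc, of av "Lp d"] \<Lambda>(2) by (meson order_trans)
          also have "\<dots> \<le> \<Lambda> * \<beta> ^ k" using dn \<Lambda>(1) by (intro mult_left_mono) auto
          also have "\<dots> \<le> K * \<beta> ^ k" unfolding K_def using yn0 \<kappa> R0' b0 by (intro mult_right_mono) auto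
          finally show ?thesis .
        qed
        have "av (y j - f v w j) \<le> max (max (av (E q j)) (av (F (v, w) j - F q j - (Lp (v, w) j - Lp q j)))) (av (Lp d j))"
          unfolding eq by (meson av_diff max.mono order_trans order_refl)
        thus ?thesis using A B C by simp
      qed
      hence "av (y j - f v w j) = 0" using zero_from_bound[OF av_nonneg K0] unfolding \<beta>_def by blast
      thus ?thesis by simp
    qed
    have "f v w = y"
    proof
      fix j show "f v w j = y j"
      proof (cases "j < c")
        case True thus ?thesis using fy by simp
      next
        case False thus ?thesis using fv vw\<Omega> yv unfolding vecs_def by auto
      qed
    qed
    thus "\<exists>v w. v \<in> vecs a \<and> (\<forall>i<a. v i \<in> V) \<and> w \<in> vecs b \<and> (\<forall>i<b. w i \<in> W) \<and> (v, w) \<in> \<Omega> \<and> f v w = y"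
      using vv wv vi wi vw\<Omega> by blast
  qed
qed

end

context vsetup
begin

lemma pnorm_left: "pnorm av a b (x, zvec) \<le> vnorm av a x"
  using vnorm_nonneg[of av a x] by (subst pnorm_le_iff) (auto simp: zvec_def intro: vnorm_ge)

lemma pnorm_right: "pnorm av a b (zvec, y) \<le> vnorm av b y"
  using vnorm_nonneg[of av b y] by (subst pnorm_le_iff) (auto simp: zvec_def intro: vnorm_ge)

lemma loc_clear:
  assumes x: "x \<in> loc_vecs t V n" and Vt: "\<forall>v\<in>V. t * v \<in> V"
  shows "\<exists>J0. \<forall>J\<ge>J0. (\<lambda>i. t ^ J * x i) \<in> vecs n \<and> (\<forall>i<n. t ^ J * x i \<in> V)"
proof -
  have Vtn: "\<forall>v\<in>V. t ^ k * v \<in> V" for k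
    by (induction k) (use Vt in \<open>auto simp: mult.assoc\<close>)
  have "\<forall>i\<in>{..<n}. \<exists>j. \<exists>v\<in>V. x i = v / t ^ j" using x unfolding loc_vecs_def by auto
  then obtain jf where jf: "\<forall>i\<in>{..<n}. \<exists>v\<in>V. x i = v / t ^ jf i" by (metis bchoice)
  define J0 where "J0 = (\<Sum>i<n. jf i)"
  have "(\<lambda>i. t ^ J * x i) \<in> vecs n \<and> (\<forall>i<n. t ^ J * x i \<in> V)" if J: "J \<ge> J0" for J
  proof
    show "(\<lambda>i. t ^ J * x i) \<in> vecs n" using x unfolding loc_vecs_def vecs_def by auto
    show "\<forall>i<n. t ^ J * x i \<in> V"
    proof (intro allI impI)
      fix i assume i: "i < n"
      obtain v where v: "v \<in> V" "x i = v / t ^ jf i" using jf i by blast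
      have "jf i \<le> J0" unfolding J0_def using i by (intro member_le_sum) auto
      hence ji: "jf i \<le> J" using J by simp
      have "t ^ J = t ^ (J - jf i) * t ^ jf i" using ji by (simp add: power_add[symmetric])
      hence "t ^ J * x i = t ^ (J - jf i) * v" using v(2) t_nz by simp
      thus "t ^ J * x i \<in> V" using Vtn v(1) by simp
    qed
  qed
  thus ?thesis by blast
qed

end

theorem proposition3p2:
  fixes T R0 F1 F2 V W :: "'a::field set"
    and t :: 'a and \<alpha> :: real and a b c :: nat
    and \<Omega> :: "((nat \<Rightarrow> 'a) \<times> (nat \<Rightarrow> 'a)) set"
    and f :: "(nat \<Rightarrow> 'a) \<Rightarrow> (nat \<Rightarrow> 'a) \<Rightarrow> (nat \<Rightarrow> 'a)"
  assumes T_dvr: "dvr_unif T t" and T_complete: "t_complete t T"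
    and R0_dvr: "dvr_frac R0 t" and R0_complete: "t_complete t R0"
    and T_sub: "T \<subseteq> R0"
    and alpha: "\<alpha> > 1"
    and F1: "subfield F1" "T \<subseteq> F1"
    and F2: "subfield F2" "T \<subseteq> F2"
    and V_sub: "V \<subseteq> F1 \<inter> R0" "submodule T V" "t_complete t V"
    and W_sub: "W \<subseteq> F2 \<inter> R0" "submodule T W" "t_complete t W"
    and VW: "{v + w | v w. v \<in> V \<and> w \<in> W} = R0"
    and Vt: "V \<inter> tpow_mod t 1 R0 = tpow_mod t 1 V"
    and Wt: "W \<inter> tpow_mod t 1 R0 = tpow_mod t 1 W"
    and abc: "a > 0" "b > 0" "c > 0"
    and \<Omega>_open: "open_in_prod (dv_abs R0 t \<alpha>) a b \<Omega>" and \<Omega>0: "(zvec, zvec) \<in> \<Omega>"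
    and f_an: "analytic_on_prod (dv_abs R0 t \<alpha>) a b c \<Omega> f"
    and f0: "f zvec zvec = zvec"
    and diff: "\<exists>La Lb.
        has_diff0 (dv_abs R0 t \<alpha>) a c {x. (x, zvec) \<in> \<Omega>} (\<lambda>x. f x zvec) La \<and>
        has_diff0 (dv_abs R0 t \<alpha>) b c {y. (zvec, y) \<in> \<Omega>} (\<lambda>y. f zvec y) Lb \<and>
        {(\<lambda>k. La x k + Lb y k) | x y. x \<in> loc_vecs t V a \<and> y \<in> loc_vecs t W b} = vecs c"
  shows "\<exists>\<epsilon>>0. \<forall>y\<in>vecs c. vnorm (dv_abs R0 t \<alpha>) c y \<le> \<epsilon> \<longrightarrow>
           (\<exists>v w. v \<in> vecs a \<and> (\<forall>i<a. v i \<in> V) \<and> w \<in> vecs b \<and> (\<forall>i<b. w i \<in> W) \<and>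
                  (v, w) \<in> \<Omega> \<and> f v w = y)"
proof -
  interpret vsetup R0 t \<alpha> by unfold_locales (rule R0_dvr, rule R0_complete, rule alpha)
  obtain \<rho>0 \<kappa> \<Lambda> Lp where \<rho>0: "\<rho>0 > 0" and \<kappa>: "\<kappa> \<ge> 0" and \<Lambda>0: "\<Lambda> \<ge> 0"
    and Lv: "\<forall>h. Lp h \<in> vecs c"
    and Ladd: "\<forall>h h'. Lp (\<lambda>i. fst h i + fst h' i, \<lambda>i. snd h i + snd h' i) = (\<lambda>k. Lp h k + Lp h' k)"
    and Lsc: "\<forall>x h. Lp (\<lambda>i. x * fst h i, \<lambda>i. x * snd h i) = (\<lambda>k. x * Lp h k)"
    and L\<Lambda>: "\<forall>h. vnorm av c (Lp h) \<le> \<Lambda> * pnorm av a b h"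
    and dom: "\<forall>q\<in>vecs a \<times> vecs b. pnorm av a b q \<le> \<rho>0 \<longrightarrow> q \<in> \<Omega>"
    and est: "\<forall>\<rho> q q'. 0 < \<rho> \<and> \<rho> \<le> \<rho>0 \<and> q \<in> vecs a \<times> vecs b \<and> q' \<in> vecs a \<times> vecs b \<and>
        pnorm av a b q \<le> \<rho> \<and> pnorm av a b q' \<le> \<rho> \<longrightarrow>
        vnorm av c (\<lambda>k. f (fst q') (snd q') k - f (fst q) (snd q) k - (Lp q' k - Lp q k))
          \<le> \<kappa> * \<rho> * pnorm av a b (vdiff (fst q') (fst q), vdiff (snd q') (snd q))"
    using analytic_estimate[OF \<Omega>_open \<Omega>0 f_an] by blast
  have Lz: "Lp (zvec, zvec) = zvec"
  proof -
    have "Lp (\<lambda>i. 0 * fst (zvec, zvec) i, \<lambda>i. 0 * snd (zvec, zvec) i) = (\<lambda>k. 0 * Lp (zvec, zvec) k)"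
      using spec[OF spec[OF Lsc, of 0], of "(zvec, zvec)"] by simp
    thus ?thesis unfolding zvec_def by simp
  qed
  have subT: "subring T" and tT: "t \<in> T" using T_dvr unfolding dvr_unif_def by auto
  have VR: "V \<subseteq> R0" and WR: "W \<subseteq> R0" using V_sub(1) W_sub(1) by auto
  have gV: "good V" by (rule good_sub[OF V_sub(2) subT tT VR V_sub(3) Vt])
  have gW: "good W" by (rule good_sub[OF W_sub(2) subT tT WR W_sub(3) Wt])
  have Vadd: "\<forall>x\<in>V. \<forall>y\<in>V. x + y \<in> V" and V0: "0 \<in> V" and Vtt: "\<forall>x\<in>V. t * x \<in> V"
    using V_sub(2) tT unfolding submodule_def by auto
  have Wadd: "\<forall>x\<in>W. \<forall>y\<in>W. x + y \<in> W" and W0: "0 \<in> W" and Wtt: "\<forall>x\<in>W. t * x \<in> W"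
    using W_sub(2) tT unfolding submodule_def by auto
  have Vd: "\<forall>x\<in>V. \<forall>y\<in>V. x - y \<in> V" using goodD(2)[OF gV] by blast
  have Wd: "\<forall>x\<in>W. \<forall>y\<in>W. x - y \<in> W" using goodD(2)[OF gW] by blast
  have fv: "\<forall>q\<in>\<Omega>. f (fst q) (snd q) \<in> vecs c" using f_an unfolding analytic_on_prod_def by blast
  obtain La Lb where hda: "has_diff0 av a c {x. (x, zvec) \<in> \<Omega>} (\<lambda>x. f x zvec) La"
    and hdb: "has_diff0 av b c {y. (zvec, y) \<in> \<Omega>} (\<lambda>y. f zvec y) Lb"
    and img: "{(\<lambda>k. La x k + Lb y k) | x y. x \<in> loc_vecs t V a \<and> y \<in> loc_vecs t W b} = vecs c"
    using diff by blast
  have Laeq: "La x = Lp (x, zvec)" if x: "x \<in> vecs a" for x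
  proof (rule diff_unique[OF hda _ _ \<rho>0 \<kappa> _ x])
    show "\<forall>x. Lp (x, zvec) \<in> vecs c" using Lv by blast
    show "\<forall>z x. Lp (\<lambda>i. z * x i, zvec) = (\<lambda>k. z * Lp (x, zvec) k)"
    proof (intro allI)
      fix z and x :: "nat \<Rightarrow> 'a"
      have "Lp (\<lambda>i. z * fst (x, zvec) i, \<lambda>i. z * snd (x, zvec) i) = (\<lambda>k. z * Lp (x, zvec) k)"
        using spec[OF spec[OF Lsc, of z], of "(x, zvec)"] by simp
      moreover have "(\<lambda>i. z * snd (x, zvec) i) = zvec" unfolding zvec_def by simp
      ultimately show "Lp (\<lambda>i. z * x i, zvec) = (\<lambda>k. z * Lp (x, zvec) k)" by simp
    qed
    show "\<forall>x\<in>vecs a. 0 < vnorm av a x \<and> vnorm av a x \<le> \<rho>0 \<longrightarrow>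
       x \<in> {x. (x, zvec) \<in> \<Omega>} \<and> vnorm av c (\<lambda>k. f x zvec k - f zvec zvec k - Lp (x, zvec) k) \<le> \<kappa> * vnorm av a x ^ 2"
    proof (intro ballI impI)
      fix x assume xv: "x \<in> vecs a" and xn: "0 < vnorm av a x \<and> vnorm av a x \<le> \<rho>0"
      have zv: "zvec \<in> vecs b" "zvec \<in> vecs a" unfolding vecs_def zvec_def by auto
      have pn: "pnorm av a b (x, zvec) \<le> vnorm av a x" by (rule pnorm_left)
      have pz: "pnorm av a b (zvec, zvec) \<le> vnorm av a x" using xn by (subst pnorm_le_iff) (auto simp: zvec_def)
      have "pnorm av a b (x, zvec) \<le> \<rho>0" using pn xn by linarith
      hence "(x, zvec) \<in> \<Omega>" using dom xv zv by blast
      moreover have "vnorm av c (\<lambda>k. f x zvec k - f zvec zvec k - (Lp (x, zvec) k - Lp (zvec, zvec) k))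
          \<le> \<kappa> * vnorm av a x * pnorm av a b (vdiff x zvec, vdiff zvec zvec)"
        using est[rule_format, of "vnorm av a x" "(zvec, zvec)" "(x, zvec)"] xn xv zv pn pz by auto
      moreover have "\<kappa> * vnorm av a x * pnorm av a b (vdiff x zvec, vdiff zvec zvec) \<le> \<kappa> * vnorm av a x ^ 2"
        using mult_left_mono[OF pn, of "\<kappa> * vnorm av a x"] \<kappa> xn by (simp add: power2_eq_square mult.assoc)
      ultimately show "x \<in> {x. (x, zvec) \<in> \<Omega>} \<and> vnorm av c (\<lambda>k. f x zvec k - f zvec zvec k - Lp (x, zvec) k) \<le> \<kappa> * vnorm av a x ^ 2"
        unfolding Lz by (simp add: zvec_def)
    qed
  qed
  have Lbeq: "Lb y = Lp (zvec, y)" if y: "y \<in> vecs b" for y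
  proof (rule diff_unique[OF hdb _ _ \<rho>0 \<kappa> _ y])
    show "\<forall>y. Lp (zvec, y) \<in> vecs c" using Lv by blast
    show "\<forall>z y. Lp (zvec, \<lambda>i. z * y i) = (\<lambda>k. z * Lp (zvec, y) k)"
    proof (intro allI)
      fix z and y :: "nat \<Rightarrow> 'a"
      have "Lp (\<lambda>i. z * fst (zvec, y) i, \<lambda>i. z * snd (zvec, y) i) = (\<lambda>k. z * Lp (zvec, y) k)"
        using spec[OF spec[OF Lsc, of z], of "(zvec, y)"] by simp
      moreover have "(\<lambda>i. z * fst (zvec, y) i) = zvec" unfolding zvec_def by simp
      ultimately show "Lp (zvec, \<lambda>i. z * y i) = (\<lambda>k. z * Lp (zvec, y) k)" by simp
    qed
    show "\<forall>y\<in>vecs b. 0 < vnorm av b y \<and> vnorm av b y \<le> \<rho>0 \<longrightarrow>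
       y \<in> {y. (zvec, y) \<in> \<Omega>} \<and> vnorm av c (\<lambda>k. f zvec y k - f zvec zvec k - Lp (zvec, y) k) \<le> \<kappa> * vnorm av b y ^ 2"
    proof (intro ballI impI)
      fix y assume yv: "y \<in> vecs b" and yn: "0 < vnorm av b y \<and> vnorm av b y \<le> \<rho>0"
      have zv: "zvec \<in> vecs b" "zvec \<in> vecs a" unfolding vecs_def zvec_def by auto
      have pn: "pnorm av a b (zvec, y) \<le> vnorm av b y" by (rule pnorm_right)
      have pz: "pnorm av a b (zvec, zvec) \<le> vnorm av b y" using yn by (subst pnorm_le_iff) (auto simp: zvec_def)
      have "pnorm av a b (zvec, y) \<le> \<rho>0" using pn yn by linarith
      hence "(zvec, y) \<in> \<Omega>" using dom yv zv by blast
      moreover have "vnorm av c (\<lambda>k. f zvec y k - f zvec zvec k - (Lp (zvec, y) k - Lp (zvec, zvec) k))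
          \<le> \<kappa> * vnorm av b y * pnorm av a b (vdiff zvec zvec, vdiff y zvec)"
        using est[rule_format, of "vnorm av b y" "(zvec, zvec)" "(zvec, y)"] yn yv zv pn pz by auto
      moreover have "\<kappa> * vnorm av b y * pnorm av a b (vdiff zvec zvec, vdiff y zvec) \<le> \<kappa> * vnorm av b y ^ 2"
        using mult_left_mono[OF pn, of "\<kappa> * vnorm av b y"] \<kappa> yn by (simp add: power2_eq_square mult.assoc)
      ultimately show "y \<in> {y. (zvec, y) \<in> \<Omega>} \<and> vnorm av c (\<lambda>k. f zvec y k - f zvec zvec k - Lp (zvec, y) k) \<le> \<kappa> * vnorm av b y ^ 2"
        unfolding Lz by (simp add: zvec_def)
    qed
  qed
  have surj: "\<forall>y\<in>R0c R0 c. \<exists>J. \<exists>g\<in>Gset a b V W. Lp g = (\<lambda>k. t ^ J * y k)"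
  proof
    fix y assume "y \<in> R0c R0 c"
    hence "y \<in> vecs c" unfolding R0c_def by simp
    then obtain x x' where xx: "y = (\<lambda>k. La x k + Lb x' k)" "x \<in> loc_vecs t V a" "x' \<in> loc_vecs t W b"
      using img by blast
    have xv: "x \<in> vecs a" "x' \<in> vecs b" using xx(2,3) unfolding loc_vecs_def by auto
    obtain J1 where J1: "\<forall>J\<ge>J1. (\<lambda>i. t ^ J * x i) \<in> vecs a \<and> (\<forall>i<a. t ^ J * x i \<in> V)"
      using loc_clear[OF xx(2) Vtt] by blast
    obtain J2 where J2: "\<forall>J\<ge>J2. (\<lambda>i. t ^ J * x' i) \<in> vecs b \<and> (\<forall>i<b. t ^ J * x' i \<in> W)"
      using loc_clear[OF xx(3) Wtt] by blast
    define J where "J = J1 + J2"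
    define g where "g = (\<lambda>i. t ^ J * x i, \<lambda>i. t ^ J * x' i)"
    have gG: "g \<in> Gset a b V W" unfolding g_def Gset_def using J1 J2 unfolding J_def by auto
    have "Lp (\<lambda>i. fst (x, zvec) i + fst (zvec, x') i, \<lambda>i. snd (x, zvec) i + snd (zvec, x') i)
        = (\<lambda>k. Lp (x, zvec) k + Lp (zvec, x') k)"
      using spec[OF spec[OF Ladd, of "(x, zvec)"], of "(zvec, x')"] by simp
    hence Lxx: "Lp (x, x') = (\<lambda>k. Lp (x, zvec) k + Lp (zvec, x') k)" unfolding zvec_def by simp
    have "Lp g = (\<lambda>k. t ^ J * Lp (x, x') k)"
      unfolding g_def using spec[OF spec[OF Lsc, of "t ^ J"], of "(x, x')"] by simp
    also have "\<dots> = (\<lambda>k. t ^ J * y k)" unfolding Lxx xx(1) Laeq[OF xv(1)] Lbeq[OF xv(2)] ..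
    finally show "\<exists>J. \<exists>g\<in>Gset a b V W. Lp g = (\<lambda>k. t ^ J * y k)" using gG by blast
  qed
  obtain N where N: "\<forall>y\<in>R0c R0 c. \<exists>g\<in>Gset a b V W. vnorm av c (\<lambda>k. Lp g k - t ^ N * y k) \<le> inverse \<alpha> ^ Suc N"
    using linear_approx[OF Lv Ladd Lsc Vd Wd surj] by blast
  show ?thesis
    by (rule newton[OF gV gW Vadd Wadd V0 W0 Vtt Wtt Lv Ladd Lsc \<Lambda>0 L\<Lambda> \<rho>0 \<kappa> dom est fv f0 N])
qed


end
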